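(* Let $\mathbf{PolyCirc}$ and $\mathbf{Poly}_{\mathbb{Z}_2}$ be as described in the context, and let $[\![\cdot]\!]:\mathbf{PolyCirc}\to\mathbf{Poly}_{\mathbb{Z}_2}$ be the identity-on-objects strict symmetric monoidal interpretation functor determined by $[\![\mathsf{discard}]\!]=\langle\rangle$, $[\![\mathsf{copy}]\!]=\langle x_1,x_1\rangle$, $[\![\mathsf{zero}]\!]=\langle 0\rangle$, $[\![\mathsf{add}]\!]=\langle x_1+x_2\rangle$, $[\![\mathsf{one}]\!]=\langle 1\rangle$, $[\![\mathsf{and}]\!]=\langle x_1x_2\rangle$. Then $[\![\cdot]\!]$ is an isomorphism of symmetric monoidal categories.
   Context: A circuit is a morphism of the free symmetric strict monoidal category whose objects are natural numbers (tensor = addition) generated by $\mathsf{discard}:1\to 0$, $\mathsf{copy}:1\to 2$, $\mathsf{zero}:0\to1$, $\mathsf{add}:2\to1$, $\mathsf{one}:0\to 1$, $\mathsf{and}:2\to 1$. Composition is written diagrammatically, $f;g$ meaning "first $f$ then $g$", $\sigma$ denotes the symmetry $2\to 2$, and $\mathsf{copy}_n:n\to 2n$, $\mathsf{discard}_n:n\to 0$ denote the evident composites of copies/discards and symmetries. Let $E$ be the following set of equations between circuits: (1) $\mathsf{copy};\sigma=\mathsf{copy}$; $\mathsf{copy};(\mathsf{copy}\otimes \mathrm{id}_1)=\mathsf{copy};(\mathrm{id}_1\otimes\mathsf{copy})$; $\mathsf{copy};(\mathsf{discard}\otimes\mathrm{id}_1)=\mathrm{id}_1$; (2) for every circuit $f:a\to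 b$: $f;\mathsf{copy}_b=\mathsf{copy}_a;(f\otimes f)$ and $f;\mathsf{discard}_b=\mathsf{discard}_a$; (3) $\sigma;\mathsf{add}=\mathsf{add}$, $(\mathsf{add}\otimes\mathrm{id}_1);\mathsf{add}=(\mathrm{id}_1\otimes\mathsf{add});\mathsf{add}$, $(\mathsf{zero}\otimes\mathrm{id}_1);\mathsf{add}=\mathrm{id}_1$; (4) the same three equations with $\mathsf{and},\mathsf{one}$ in place of $\mathsf{add},\mathsf{zero}$; (5) $\mathsf{copy};\mathsf{and}=\mathrm{id}_1$ (idempotence); $\mathsf{copy};\mathsf{add}=\mathsf{discard};\mathsf{zero}$; and distributivity $(\mathrm{id}_1\otimes\mathsf{add});\mathsf{and}=(\mathsf{copy}\otimes\mathrm{id}_2);(\mathrm{id}_1\otimes\sigma\otimes\mathrm{id}_1);(\mathsf{and}\otimes\mathsf{and});\mathsf{add}$ (i.e. $x(y+z)=xy+xz$). Let $A$ be $E$ with the idempotence equation $\mathsf{copy};\mathsf{and}=\mathrm{id}_1$ removed. $\mathbf{PolyCirc}$ is the symmetric strict monoidal category of circuits quotiented by the smallest congruence (for composition and tensor) containing $A$. $\mathbf{Poly}_{\mathbb{Z}_2}$ is the category whose objects are natural numbers and whose morphisms $a\to b$ are $b$-tuples $\langle p_1,\dots,p_b\rangle$ of polynomials $p_i\in\mathbb{Z}_2[x_1,\dots,x_a]$ (genuine polynomials, so $x^2\neq x$), composition $a\xrightarrow{p}b\xrightarrow{q}c$ being substitution $q(p_1,\dots,p_b)$, with monoidal product given by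 juxtaposition of tuples with variables renumbered. *)

theory Defs
  imports Main "HOL-Library.Poly_Mapping" "HOL-Library.Z2"
begin

datatype gen = Discard | Copy | Zero | Add | One | And

datatype circ =
    Gen gen
  | Id nat
  | Sw nat nat
  | Seq circ circ        (* diagrammatic composition f ; g *)
  | Par circ circ

fun gdom :: "gen \<Rightarrow> nat" where
  "gdom Discard = 1" | "gdom Copy = 1" | "gdom Zero = 0"
| "gdom Add = 2" | "gdom One = 0" | "gdom And = 2"

fun gcod :: "gen \<Rightarrow> nat" where
  "gcod Discard = 0" | "gcod Copy = 2" | "gcod Zero = 1"
| "gcod Add = 1" | "gcod One = 1" | "gcod And = 1"

fun cdom :: "circ \<Rightarrow> nat" where
  "cdom (Gen g) = gdom g"
| "cdom (Id n) = n"
| "cdom (Sw m n) = m + n"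
| "cdom (Seq f g) = cdom f"
| "cdom (Par f g) = cdom f + cdom g"

fun ccod :: "circ \<Rightarrow> nat" where
  "ccod (Gen g) = gcod g"
| "ccod (Id n) = n"
| "ccod (Sw m n) = n + m"
| "ccod (Seq f g) = ccod g"
| "ccod (Par f g) = ccod f + ccod g"

fun wf :: "circ \<Rightarrow> bool" where
  "wf (Gen g) = True"
| "wf (Id n) = True"
| "wf (Sw m n) = True"
| "wf (Seq f g) = (wf f \<and> wf g \<and> ccod f = cdom g)"
| "wf (Par f g) = (wf f \<and> wf g)"

definition hom :: "circ \<Rightarrow> nat \<Rightarrow> nat \<Rightarrow> bool" where
  "hom f a b \<longleftrightarrow> wf f \<and> cdom f = a \<and> ccod f = b"

abbreviation "sigma \<equiv> Sw 1 1"

text \<open>copy_n : n -> 2n (output x1..xn x1..xn) and discard_n : n -> 0\<close>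
fun copyn :: "nat \<Rightarrow> circ" where
  "copyn 0 = Id 0"
| "copyn (Suc n) = Seq (Par (Gen Copy) (copyn n)) (Par (Par (Id 1) (Sw 1 n)) (Id n))"

fun discardn :: "nat \<Rightarrow> circ" where
  "discardn 0 = Id 0"
| "discardn (Suc n) = Par (Gen Discard) (discardn n)"

inductive ceq :: "circ \<Rightarrow> circ \<Rightarrow> bool" where
  refl: "wf f \<Longrightarrow> ceq f f"
| sym: "ceq f g \<Longrightarrow> ceq g f"
| trans: "ceq f g \<Longrightarrow> ceq g h \<Longrightarrow> ceq f h"
| cong_seq: "ceq f f' \<Longrightarrow> ceq g g' \<Longrightarrow> ccod f = cdom g \<Longrightarrow> ceq (Seq f g) (Seq f' g')"
| cong_par: "ceq f f' \<Longrightarrow> ceq g g' \<Longrightarrow> ceq (Par f g) (Par f' g')"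
| id_left: "wf f \<Longrightarrow> ceq (Seq (Id (cdom f)) f) f"
| id_right: "wf f \<Longrightarrow> ceq (Seq f (Id (ccod f))) f"
| seq_assoc: "wf f \<Longrightarrow> wf g \<Longrightarrow> wf h \<Longrightarrow> ccod f = cdom g \<Longrightarrow> ccod g = cdom h \<Longrightarrow>
     ceq (Seq (Seq f g) h) (Seq f (Seq g h))"
| par_assoc: "wf f \<Longrightarrow> wf g \<Longrightarrow> wf h \<Longrightarrow> ceq (Par (Par f g) h) (Par f (Par g h))"
| par_unit_left: "wf f \<Longrightarrow> ceq (Par (Id 0) f) f"
| par_unit_right: "wf f \<Longrightarrow> ceq (Par f (Id 0)) f"
| par_id: "ceq (Par (Id m) (Id n)) (Id (m + n))"
| interchange: "wf f \<Longrightarrow> wf g \<Longrightarrow> wf h \<Longrightarrow> wf k \<Longrightarrow> ccod f = cdom g \<Longrightarrow> ccod h = cdom k \<Longrightarrow>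
     ceq (Par (Seq f g) (Seq h k)) (Seq (Par f h) (Par g k))"
| sw_inv: "ceq (Seq (Sw m n) (Sw n m)) (Id (m + n))"
| sw_hex1: "ceq (Sw m (n + k)) (Seq (Par (Sw m n) (Id k)) (Par (Id n) (Sw m k)))"
| sw_hex2: "ceq (Sw (m + n) k) (Seq (Par (Id m) (Sw n k)) (Par (Sw m k) (Id n)))"
| sw_nat: "wf f \<Longrightarrow> wf g \<Longrightarrow>
     ceq (Seq (Par f g) (Sw (ccod f) (ccod g))) (Seq (Sw (cdom f) (cdom g)) (Par g f))"
| copy_comm: "ceq (Seq (Gen Copy) sigma) (Gen Copy)"
| copy_assoc: "ceq (Seq (Gen Copy) (Par (Gen Copy) (Id 1))) (Seq (Gen Copy) (Par (Id 1) (Gen Copy)))"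
| copy_unit: "ceq (Seq (Gen Copy) (Par (Gen Discard) (Id 1))) (Id 1)"
| copy_nat: "wf f \<Longrightarrow> ceq (Seq f (copyn (ccod f))) (Seq (copyn (cdom f)) (Par f f))"
| discard_nat: "wf f \<Longrightarrow> ceq (Seq f (discardn (ccod f))) (discardn (cdom f))"
| add_comm: "ceq (Seq sigma (Gen Add)) (Gen Add)"
| add_assoc: "ceq (Seq (Par (Gen Add) (Id 1)) (Gen Add)) (Seq (Par (Id 1) (Gen Add)) (Gen Add))"
| add_unit: "ceq (Seq (Par (Gen Zero) (Id 1)) (Gen Add)) (Id 1)"
| and_comm: "ceq (Seq sigma (Gen And)) (Gen And)"
| and_assoc: "ceq (Seq (Par (Gen And) (Id 1)) (Gen And)) (Seq (Par (Id 1) (Gen And)) (Gen And))"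
| and_unit: "ceq (Seq (Par (Gen One) (Id 1)) (Gen And)) (Id 1)"
  (* (5) without idempotence *)
| char2: "ceq (Seq (Gen Copy) (Gen Add)) (Seq (Gen Discard) (Gen Zero))"
| distrib: "ceq (Seq (Par (Id 1) (Gen Add)) (Gen And))
     (Seq (Seq (Seq (Par (Gen Copy) (Id 2)) (Par (Par (Id 1) sigma) (Id 1))) (Par (Gen And) (Gen And))) (Gen Add))"

section \<open>Polynomials over Z_2 in variables x_0, x_1, ... (x_{i+1} of the paper is X i)\<close>

type_synonym mono = "nat \<Rightarrow>\<^sub>0 nat"
type_synonym zpoly = "mono \<Rightarrow>\<^sub>0 bit"

definition X :: "nat \<Rightarrow> zpoly" where
  "X i = Poly_Mapping.single (Poly_Mapping.single i 1) 1"

definition const :: "bit \<Rightarrow> zpoly" where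
  "const c = Poly_Mapping.single 0 c"

definition subst :: "(nat \<Rightarrow> zpoly) \<Rightarrow> zpoly \<Rightarrow> zpoly" where
  "subst s p = sum (\<lambda>m. const (Poly_Mapping.lookup p m) * prod (\<lambda>i. (s i) ^ (Poly_Mapping.lookup m i)) (Poly_Mapping.keys m)) (Poly_Mapping.keys p)"

definition vars_in :: "nat set \<Rightarrow> zpoly \<Rightarrow> bool" where
  "vars_in V p \<longleftrightarrow> (\<forall>m\<in>Poly_Mapping.keys p. Poly_Mapping.keys m \<subseteq> V)"

fun ginterp :: "gen \<Rightarrow> zpoly list" where
  "ginterp Discard = []"
| "ginterp Copy = [X 0, X 0]"
| "ginterp Zero = [0]"
| "ginterp Add = [X 0 + X 1]"
| "ginterp One = [1]"
| "ginterp And = [X 0 * X 1]"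

fun interp :: "circ \<Rightarrow> zpoly list" where
  "interp (Gen g) = ginterp g"
| "interp (Id n) = map X [0..<n]"
| "interp (Sw m n) = map X [m..<m + n] @ map X [0..<m]"
| "interp (Seq f g) = map (subst (\<lambda>i. interp f ! i)) (interp g)"
| "interp (Par f g) = interp f @ map (subst (\<lambda>i. X (i + cdom f))) (interp g)"

end

theory Submission
  imports Defs
begin


definition mon :: "(nat \<Rightarrow> 'a::comm_ring_1) \<Rightarrow> mono \<Rightarrow> 'a" where
  "mon s m = (\<Prod>i\<in>Poly_Mapping.keys m. s i ^ Poly_Mapping.lookup m i)"
definition ev :: "(nat \<Rightarrow> 'a::comm_ring_1) \<Rightarrow> zpoly \<Rightarrow> 'a" where
  "ev s p = (\<Sum>m\<in>Poly_Mapping.keys p. mon s m)"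
definition cf :: "bit \<Rightarrow> 'a::comm_ring_1" where
  "cf c = (if c = 0 then 0 else 1)"

lemma mon_superset:
  assumes "finite S" "Poly_Mapping.keys m \<subseteq> S"
  shows "mon s m = (\<Prod>i\<in>S. s i ^ Poly_Mapping.lookup m i)"
  unfolding mon_def
  by (rule prod.mono_neutral_left) (use assms in \<open>auto simp: in_keys_iff\<close>)

lemma mon_add: "mon s (m1 + m2) = mon s m1 * mon s m2"
proof -
  let ?S = "Poly_Mapping.keys m1 \<union> Poly_Mapping.keys m2"
  have "mon s (m1 + m2) = (\<Prod>i\<in>?S. s i ^ Poly_Mapping.lookup (m1+m2) i)"
    using keys_add[of m1 m2] by (intro mon_superset) auto
  also have "\<dots> = (\<Prod>i\<in>?S. s i ^ Poly_Mapping.lookup m1 i) * (\<Prod>i\<in>?S. s i ^ Poly_Mapping.lookup m2 i)"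
    by (simp add: lookup_add power_add prod.distrib)
  also have "\<dots> = mon s m1 * mon s m2"
    by (subst (1 2) mon_superset[where S="?S"]) auto
  finally show ?thesis .
qed

lemma mon_zero [simp]: "mon s 0 = 1" by (simp add: mon_def)

lemma mon_single [simp]: "mon s (Poly_Mapping.single i k) = s i ^ k"
  by (simp add: mon_def)

lemma ev_superset:
  assumes "finite S" "Poly_Mapping.keys p \<subseteq> S"
  shows "ev s p = (\<Sum>m\<in>S. cf (Poly_Mapping.lookup p m) * mon s m)"
proof -
  have "ev s p = (\<Sum>m\<in>Poly_Mapping.keys p. cf (Poly_Mapping.lookup p m) * mon s m)"
    unfolding ev_def by (rule sum.cong) (auto simp: cf_def in_keys_iff)
  also have "\<dots> = (\<Sum>m\<in>S. cf (Poly_Mapping.lookup p m) * mon s m)"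
    by (rule sum.mono_neutral_left) (use assms in \<open>auto simp: in_keys_iff cf_def\<close>)
  finally show ?thesis .
qed

lemma cf_add: "(1::'a::comm_ring_1) + 1 = 0 \<Longrightarrow> (cf (a + b) :: 'a) = cf a + cf b"
  by (cases a; cases b) (simp_all add: cf_def)

lemma cf_mult: "cf (a * b) = cf a * cf b"
  by (cases a; cases b) (simp_all add: cf_def)

lemma ev_add:
  assumes "(1::'a::comm_ring_1) + 1 = 0"
  shows "ev (s :: nat \<Rightarrow> 'a) (p + q) = ev s p + ev s q"
proof -
  let ?S = "Poly_Mapping.keys p \<union> Poly_Mapping.keys q"
  have "ev s (p+q) = (\<Sum>m\<in>?S. cf (Poly_Mapping.lookup (p+q) m) * mon s m)"
    using keys_add[of p q] by (intro ev_superset) auto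
  also have "\<dots> = (\<Sum>m\<in>?S. cf (Poly_Mapping.lookup p m) * mon s m) + (\<Sum>m\<in>?S. cf (Poly_Mapping.lookup q m) * mon s m)"
    by (simp del: add_bit_eq_xor add: lookup_add cf_add[OF assms] distrib_right sum.distrib)
  also have "\<dots> = ev s p + ev s q"
    by (subst (1 2) ev_superset[where S="?S"]) auto
  finally show ?thesis .
qed

lemma ev_zero [simp]: "ev s 0 = 0" by (simp add: ev_def)

lemma ev_single: "ev s (Poly_Mapping.single m c) = cf c * mon s m"
  by (simp add: ev_def cf_def)

lemma ev_one [simp]: "ev s 1 = 1"
  by (metis ev_single single_one cf_def mon_zero mult_1 one_neq_zero)

lemma update_eq_add: "a \<notin> Poly_Mapping.keys f \<Longrightarrow> Poly_Mapping.update a b f = Poly_Mapping.single a b + f"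
  by (rule poly_mapping_eqI) (auto simp: lookup_update lookup_add lookup_single in_keys_iff)

lemma ev_mult_single:
  assumes "(1::'a::comm_ring_1) + 1 = 0"
  shows "ev (s :: nat \<Rightarrow> 'a) (Poly_Mapping.single m c * q) = ev s (Poly_Mapping.single m c) * ev s q"
proof (induction q rule: Poly_Mapping.update_induct)
  case const then show ?case by simp
next
  case (update a b f)
  then show ?case
    by (simp add: update_eq_add distrib_left ev_add[OF assms] mult_single ev_single cf_mult mon_add cf_def mult_ac)
qed

lemma ev_mult:
  assumes "(1::'a::comm_ring_1) + 1 = 0"
  shows "ev (s :: nat \<Rightarrow> 'a) (p * q) = ev s p * ev s q"
proof (induction p rule: Poly_Mapping.update_induct)
  case const then show ?case by simp
next
  case (update a b f)
  then show ?case
    by (simp add: update_eq_add distrib_right ev_add[OF assms] ev_mult_single[OF assms])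
qed

lemma X_keys: "Poly_Mapping.keys (X i) = {Poly_Mapping.single i 1}"
  by (simp add: X_def)

lemma ev_X [simp]: "ev s (X i) = s i"
  by (simp add: ev_def X_keys)

lemma zpoly_char2: "(1::zpoly) + 1 = 0"
  by (metis single_one single_add bit_2_eq_0 one_add_one single_zero)

lemma X_pow: "X i ^ k = Poly_Mapping.single (Poly_Mapping.single i k) 1"
proof (induction k)
  case 0 then show ?case by simp
next
  case (Suc k) then show ?case
    by (simp add: X_def mult_single single_add[symmetric])
qed

lemma mon_X: "mon X m = Poly_Mapping.single m (1::bit)"
proof (induction m rule: Poly_Mapping.update_induct)
  case const then show ?case by simp
next
  case (update a b f)
  then show ?case
    by (simp add: update_eq_add mon_add X_pow mult_single)
qed

lemma ev_X_id: "ev X p = p"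
proof (induction p rule: Poly_Mapping.update_induct)
  case const then show ?case by simp
next
  case (update a b f)
  then show ?case
    by (simp add: update_eq_add ev_add[OF zpoly_char2] ev_single mon_X cf_def)
qed

lemma subst_ev: "subst s p = ev s p"
  unfolding subst_def ev_def mon_def
  by (rule sum.cong) (auto simp: const_def in_keys_iff)

lemma sum_closed: "finite S \<Longrightarrow> P 0 \<Longrightarrow> (\<And>a b. P a \<Longrightarrow> P b \<Longrightarrow> P (a + b)) \<Longrightarrow> (\<And>x. x \<in> S \<Longrightarrow> P (g x)) \<Longrightarrow> P (sum g S)"
  by (induction S rule: finite_induct) auto

lemma prod_closed: "finite S \<Longrightarrow> P 1 \<Longrightarrow> (\<And>a b. P a \<Longrightarrow> P b \<Longrightarrow> P (a * b)) \<Longrightarrow> (\<And>x. x \<in> S \<Longrightarrow> P (g x)) \<Longrightarrow> P (prod g S)"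
  by (induction S rule: finite_induct) auto

lemma power_closed: "P 1 \<Longrightarrow> (\<And>a b. P a \<Longrightarrow> P b \<Longrightarrow> P (a * b)) \<Longrightarrow> P x \<Longrightarrow> P (x ^ n)"
  by (induction n) auto

lemma zpoly_induct [consumes 1, case_names zero one var add mult]:
  assumes "vars_in V p" "P 0" "P 1" "\<And>i. i \<in> V \<Longrightarrow> P (X i)"
    "\<And>p q. P p \<Longrightarrow> P q \<Longrightarrow> P (p + q)" "\<And>p q. P p \<Longrightarrow> P q \<Longrightarrow> P (p * q)"
  shows "P p"
proof -
  have "P (ev X p)"
    unfolding ev_def
  proof (rule sum_closed)
    fix m assume m: "m \<in> Poly_Mapping.keys p"
    show "P (mon X m)" unfolding mon_def
    proof (rule prod_closed)
      fix i assume "i \<in> Poly_Mapping.keys m"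
      with m assms(1) have "i \<in> V" by (auto simp: vars_in_def)
      then show "P (X i ^ Poly_Mapping.lookup m i)"
        by (intro power_closed[where P=P] assms(3) assms(6) assms(4))
    qed (simp_all add: assms(3) assms(6))
  qed (simp_all add: assms(2) assms(5))
  then show ?thesis by (simp add: ev_X_id)
qed

lemma vars_in_add: "vars_in V p \<Longrightarrow> vars_in V q \<Longrightarrow> vars_in V (p + q)"
  using keys_add[of p q] by (auto simp: vars_in_def)

lemma keys_add_nat: "Poly_Mapping.keys ((a::mono) + b) \<subseteq> Poly_Mapping.keys a \<union> Poly_Mapping.keys b"
  by (rule keys_add)

lemma vars_in_mult: "vars_in V p \<Longrightarrow> vars_in V q \<Longrightarrow> vars_in V (p * q)"
  unfolding vars_in_def
proof
  fix m assume p: "\<forall>m\<in>Poly_Mapping.keys p. Poly_Mapping.keys m \<subseteq> V"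
    and q: "\<forall>m\<in>Poly_Mapping.keys q. Poly_Mapping.keys m \<subseteq> V"
    and m: "m \<in> Poly_Mapping.keys (p * q)"
  from m keys_mult[of p q] obtain a b where "m = a + b" "a \<in> Poly_Mapping.keys p" "b \<in> Poly_Mapping.keys q"
    by blast
  with p q keys_add_nat[of a b] show "Poly_Mapping.keys m \<subseteq> V" by blast
qed

lemma vars_in_zero [simp]: "vars_in V 0" by (simp add: vars_in_def)
lemma vars_in_one [simp]: "vars_in V 1" by (simp add: vars_in_def)
lemma vars_in_X [simp]: "vars_in V (X i) \<longleftrightarrow> i \<in> V" by (simp add: vars_in_def X_keys)
lemma vars_in_UNIV [simp]: "vars_in UNIV p" by (simp add: vars_in_def)
lemma vars_in_mono: "vars_in V p \<Longrightarrow> V \<subseteq> W \<Longrightarrow> vars_in W p" by (auto simp: vars_in_def)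

lemma ev_cong:
  assumes "vars_in V p" "\<And>i. i \<in> V \<Longrightarrow> s i = t i"
  shows "ev s p = ev t p"
  unfolding ev_def mon_def
  by (rule sum.cong[OF HOL.refl], rule prod.cong[OF HOL.refl]) (use assms in \<open>fastforce simp: vars_in_def\<close>)

lemma vars_in_ev:
  assumes "vars_in V p" "\<And>i. i \<in> V \<Longrightarrow> vars_in W (s i)"
  shows "vars_in W (ev s p)"
  using assms(1)
proof (induction rule: zpoly_induct)
  case (add p q) then show ?case by (simp only: ev_add[OF zpoly_char2] vars_in_add)
next
  case (mult p q) then show ?case by (simp only: ev_mult[OF zpoly_char2] vars_in_mult)
qed (auto simp: assms(2))

lemma ev_comp:
  fixes s :: "nat \<Rightarrow> 'a::comm_ring_1"
  assumes "(1::'a) + 1 = 0"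
  shows "ev s (ev t p) = ev (\<lambda>i. ev s (t i)) p"
  using vars_in_UNIV[of p]
proof (induction rule: zpoly_induct)
  case (add p q) then show ?case by (simp only: ev_add[OF zpoly_char2] ev_add[OF assms])
next
  case (mult p q) then show ?case by (simp only: ev_mult[OF zpoly_char2] ev_mult[OF assms])
qed auto



definition sh :: "nat \<Rightarrow> zpoly \<Rightarrow> zpoly" where "sh k = ev (\<lambda>i. X (i + k))"

lemma interp_seq: "interp (Seq f g) = map (ev ((!) (interp f))) (interp g)"
  by (simp add: subst_ev[abs_def])
lemma interp_par: "interp (Par f g) = interp f @ map (sh (cdom f)) (interp g)"
  by (simp add: subst_ev[abs_def] sh_def)
declare interp.simps(4,5)[simp del]

lemma sh_X [simp]: "sh k (X i) = X (i + k)" by (simp add: sh_def)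

lemma seqX: "\<forall>i\<in>set ys. i < length xs \<Longrightarrow> map (ev ((!) (map X xs))) (map X ys) = map X (map ((!) xs) ys)"
  by auto
lemma parX: "map X xs @ map (sh a) (map X ys) = map X (xs @ map (\<lambda>i. i + a) ys)"
  by auto

lemma copyn_wf: "wf (copyn n) \<and> cdom (copyn n) = n \<and> ccod (copyn n) = 2 * n"
  by (induction n) auto

lemma interp_copyn: "interp (copyn n) = map X ([0..<n] @ [0..<n])"
proof (induction n)
  case 0 then show ?case by simp
next
  case (Suc n)
  have A: "interp (Par (Gen Copy) (copyn n)) = map X ([0,0] @ map (\<lambda>i. i + 1) ([0..<n] @ [0..<n]))"
    using Suc by (simp add: interp_par copyn_wf del: map_append upt_Suc)
  have B: "interp (Par (Par (Id 1) (Sw 1 n)) (Id n)) = map X (([0] @ map (\<lambda>i. i + 1) ([1..<1+n] @ [0..<1])) @ map (\<lambda>i. i + (n+2)) [0..<n])"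
    by (simp only: interp_par interp.simps parX) simp
  have C: "map ((!) ([0,0] @ map (\<lambda>i. i + 1) ([0..<n] @ [0..<n]))) (([0] @ map (\<lambda>i. i + 1) ([1..<1+n] @ [0..<1])) @ map (\<lambda>i. i + (n+2)) [0..<n])
     = [0..<Suc n] @ [0..<Suc n]"
    by (rule nth_equalityI) (auto simp: nth_append nth_Cons')
  show ?case
    apply (simp only: copyn.simps interp_seq A B)
    apply (subst seqX)
     apply (auto simp: nth_append)[1]
    using C by simp
qed

lemma vars_in_sh: "vars_in {..<b} p \<Longrightarrow> vars_in {a..<a+b} (sh a p)"
  unfolding sh_def by (rule vars_in_ev) auto

lemma wf_interp: "wf f \<Longrightarrow> length (interp f) = ccod f \<and> (\<forall>p\<in>set (interp f). vars_in {..<cdom f} p)"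
proof (induction f)
  case (Gen g) then show ?case
    by (cases g) (auto intro!: vars_in_add vars_in_mult)
next
  case (Seq f g)
  then show ?case
    by (auto simp: interp_seq intro!: vars_in_ev[where V="{..<cdom g}"])
next
  case (Par f g)
  then show ?case
  proof (auto simp: interp_par)
    fix p assume "p \<in> set (interp f)"
    then show "vars_in {..<cdom f + cdom g} p" using Par by (auto intro: vars_in_mono)
  next
    fix p assume "p \<in> set (interp g)"
    then have "vars_in {cdom f..<cdom f + cdom g} (sh (cdom f) p)" using Par by (auto intro: vars_in_sh)
    then show "vars_in {..<cdom f + cdom g} (sh (cdom f) p)" by (rule vars_in_mono) auto
  qed
qed auto



lemma ev_X_fun [simp]: "ev X = (\<lambda>p. p)"
  by (rule ext) (simp add: ev_X_id)

lemma ev_sh: "ev (s :: nat \<Rightarrow> zpoly) (sh k p) = ev (\<lambda>i. s (i + k)) p"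
  unfolding sh_def by (simp add: ev_comp[OF zpoly_char2])

lemma sh_ev: "sh k (ev s p) = ev (\<lambda>i. sh k (s i)) p"
  unfolding sh_def by (simp add: ev_comp[OF zpoly_char2])

lemma sh_sh: "sh a (sh b p) = sh (a + b) p"
  unfolding sh_def by (simp add: ev_comp[OF zpoly_char2] ac_simps)

lemma sh_0: "sh 0 p = p"
  unfolding sh_def by (simp add: ev_X_id)

lemma ev_id_nth: "vars_in {..<n} p \<Longrightarrow> ev ((!) (map X [0..<n])) p = p"
  by (subst ev_cong[where t=X]) (auto simp: ev_X_id)

lemma discardn_wf: "wf (discardn n) \<and> cdom (discardn n) = n \<and> ccod (discardn n) = 0 \<and> interp (discardn n) = []"
  by (induction n) (auto simp: interp_par)

lemma set_interp_vars: "wf f \<Longrightarrow> p \<in> set (interp f) \<Longrightarrow> vars_in {..<cdom f} p"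
  using wf_interp by blast
lemma length_interp: "wf f \<Longrightarrow> length (interp f) = ccod f"
  using wf_interp by blast

lemma map_ev_cong: "(\<And>p. p \<in> set ps \<Longrightarrow> vars_in {..<n} p) \<Longrightarrow> (\<And>i. i < n \<Longrightarrow> s i = t i) \<Longrightarrow> map (ev s) ps = map (ev t) ps"
  by (auto intro!: ev_cong[where V="{..<n}"])

lemma seq_assoc_interp:
  assumes "wf f" "wf g" "wf h" "ccod f = cdom g" "ccod g = cdom h"
  shows "interp (Seq (Seq f g) h) = interp (Seq f (Seq g h))"
proof -
  have "interp (Seq (Seq f g) h) = map (ev (\<lambda>i. ev ((!) (interp f)) (interp g ! i))) (interp h)"
    unfolding interp_seq
    by (rule map_ev_cong[where n="cdom h"]) (use assms in \<open>auto simp: set_interp_vars length_interp\<close>)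
  also have "\<dots> = interp (Seq f (Seq g h))"
    unfolding interp_seq by (simp add: ev_comp[OF zpoly_char2])
  finally show ?thesis .
qed

lemma interchange_interp:
  assumes "wf f" "wf g" "wf h" "wf k" "ccod f = cdom g" "ccod h = cdom k"
  shows "interp (Par (Seq f g) (Seq h k)) = interp (Seq (Par f h) (Par g k))"
proof -
  let ?L = "interp f @ map (sh (cdom f)) (interp h)"
  have 1: "map (ev ((!) ?L)) (interp g) = map (ev ((!) (interp f))) (interp g)"
    by (rule map_ev_cong[where n="cdom g"]) (use assms in \<open>auto simp: set_interp_vars length_interp nth_append\<close>)
  have 2: "map (ev ((!) ?L)) (map (sh (cdom g)) (interp k)) = map (sh (cdom f)) (map (ev ((!) (interp h))) (interp k))"
  proof -
    have "map (ev ((!) ?L)) (map (sh (cdom g)) (interp k)) = map (ev (\<lambda>i. sh (cdom f) (interp h ! i))) (interp k)"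
      unfolding map_map o_def ev_sh
      by (rule map_ev_cong[where n="cdom k"]) (use assms in \<open>auto simp: set_interp_vars length_interp nth_append\<close>)
    then show ?thesis by (simp add: sh_ev)
  qed
  show ?thesis
    unfolding interp_seq interp_par using 1 2 by simp
qed

lemma sw_nat_interp:
  assumes "wf f" "wf g"
  shows "interp (Seq (Par f g) (Sw (ccod f) (ccod g))) = interp (Seq (Sw (cdom f) (cdom g)) (Par g f))"
proof -
  let ?M = "map X [cdom f..<cdom f + cdom g] @ map X [0..<cdom f]"
  have 1: "map (ev ((!) ?M)) (interp g) = map (sh (cdom f)) (interp g)"
    unfolding sh_def
    by (rule map_ev_cong[where n="cdom g"]) (use assms in \<open>auto simp: set_interp_vars nth_append add.commute\<close>)
  have 2: "map (ev ((!) ?M)) (map (sh (cdom g)) (interp f)) = interp f"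
  proof -
    have "map (ev ((!) ?M)) (map (sh (cdom g)) (interp f)) = map (ev X) (interp f)"
      unfolding map_map o_def ev_sh
      by (rule map_ev_cong[where n="cdom f"]) (use assms in \<open>auto simp: set_interp_vars nth_append\<close>)
    then show ?thesis by (simp add: ev_X_id)
  qed
  have 3: "map (ev ((!) (interp f @ map (sh (cdom f)) (interp g))))
       (map X [ccod f..<ccod f + ccod g] @ map X [0..<ccod f]) = map (sh (cdom f)) (interp g) @ interp f"
    using assms by (auto simp: length_interp nth_append intro!: nth_equalityI)
  show ?thesis
    unfolding interp_seq interp_par interp.simps 3 using 1 2 by simp
qed

lemma copy_nat_interp:
  assumes "wf f"
  shows "interp (Seq f (copyn (ccod f))) = interp (Seq (copyn (cdom f)) (Par f f))"
proof -
  let ?M = "map X ([0..<cdom f] @ [0..<cdom f])"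
  have 1: "map (ev ((!) ?M)) (interp f) = interp f"
    by (subst map_ev_cong[where n="cdom f" and t=X]) (use assms in \<open>auto simp: set_interp_vars nth_append ev_X_id\<close>)
  have 2: "map (ev ((!) ?M)) (map (sh (cdom f)) (interp f)) = interp f"
    unfolding map_map o_def ev_sh
    by (subst map_ev_cong[where n="cdom f" and t=X]) (use assms in \<open>auto simp: set_interp_vars nth_append ev_X_id\<close>)
  have 3: "map (ev ((!) (interp f))) (map X ([0..<ccod f] @ [0..<ccod f])) = interp f @ interp f"
    using assms by (auto simp: length_interp intro!: nth_equalityI simp del: map_append)
      (auto simp: nth_append length_interp)
  show ?thesis
    unfolding interp_seq interp_par interp_copyn 3 using 1 2 by simp
qed

lemma ev_add_z [simp]: "ev (s::nat\<Rightarrow>zpoly) (p + q) = ev s p + ev s q"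
  by (rule ev_add[OF zpoly_char2])
lemma ev_mult_z [simp]: "ev (s::nat\<Rightarrow>zpoly) (p * q) = ev s p * ev s q"
  by (rule ev_mult[OF zpoly_char2])
lemma sh_add [simp]: "sh k (p + q) = sh k p + sh k q" by (simp add: sh_def)
lemma sh_mult [simp]: "sh k (p * q) = sh k p * sh k q" by (simp add: sh_def)
lemma sh_zero [simp]: "sh k 0 = 0" by (simp add: sh_def)
lemma sh_one [simp]: "sh k 1 = 1" by (simp add: sh_def)

lemma sw_interp: "interp (Sw m n) = map X ([m..<m+n] @ [0..<m])"
  by simp

lemma sw_inv_interp: "interp (Seq (Sw m n) (Sw n m)) = interp (Id (m + n))"
  by (auto simp: interp_seq nth_append intro!: nth_equalityI)

lemma seqX': "\<forall>i\<in>set ys. i < length xs \<Longrightarrow> map (ev ((!) (map X xs))) (map X ys) = map X (map ((!) xs) ys)"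
  by auto

lemma interp_par_X: "interp f = map X xs \<Longrightarrow> interp g = map X ys \<Longrightarrow> interp (Par f g) = map X (xs @ map (\<lambda>i. i + cdom f) ys)"
  by (simp add: interp_par)
lemma interp_seq_X: "interp f = map X xs \<Longrightarrow> interp g = map X ys \<Longrightarrow> \<forall>i\<in>set ys. i < length xs \<Longrightarrow> interp (Seq f g) = map X (map ((!) xs) ys)"
  by (simp add: interp_seq)
lemma interp_Id_X: "interp (Id n) = map X [0..<n]" by simp

lemma sw_hex1_interp: "interp (Sw m (n + k)) = interp (Seq (Par (Sw m n) (Id k)) (Par (Id n) (Sw m k)))"
proof -
  have L: "map ((!) ([m..<m+n] @ [0..<m] @ map (\<lambda>i. i + (m+n)) [0..<k])) ([0..<n] @ map (\<lambda>i. i + n) ([m..<m+k] @ [0..<m]))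
     = [m..<m+(n+k)] @ [0..<m]"
    by (rule nth_equalityI) (auto simp: nth_append)
  have "interp (Seq (Par (Sw m n) (Id k)) (Par (Id n) (Sw m k))) =
     map X (map ((!) ([m..<m+n] @ [0..<m] @ map (\<lambda>i. i + (m+n)) [0..<k])) ([0..<n] @ map (\<lambda>i. i + n) ([m..<m+k] @ [0..<m])))"
    by (rule HOL.trans[OF interp_seq_X[OF interp_par_X[OF sw_interp interp_Id_X] interp_par_X[OF interp_Id_X sw_interp]]]) (auto simp: ac_simps)
  then show ?thesis unfolding L by simp
qed

lemma sw_hex2_interp: "interp (Sw (m + n) k) = interp (Seq (Par (Id m) (Sw n k)) (Par (Sw m k) (Id n)))"
proof -
  have L: "map ((!) ([0..<m] @ map (\<lambda>i. i + m) ([n..<n+k] @ [0..<n]))) (([m..<m+k] @ [0..<m]) @ map (\<lambda>i. i + (m+k)) [0..<n])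
     = [m+n..<m+n+k] @ [0..<m+n]"
    by (rule nth_equalityI) (auto simp: nth_append)
  have "interp (Seq (Par (Id m) (Sw n k)) (Par (Sw m k) (Id n))) =
     map X (map ((!) ([0..<m] @ map (\<lambda>i. i + m) ([n..<n+k] @ [0..<n]))) (([m..<m+k] @ [0..<m]) @ map (\<lambda>i. i + (m+k)) [0..<n]))"
    by (rule HOL.trans[OF interp_seq_X[OF interp_par_X[OF interp_Id_X sw_interp] interp_par_X[OF sw_interp interp_Id_X]]]) (auto simp: ac_simps)
  then show ?thesis unfolding L by simp
qed



lemma zpoly_add_self [simp]: "(p::zpoly) + p = 0"
  by (metis zpoly_char2 distrib_right mult_1 mult_zero_left)

lemma ceq_sound: "ceq f g \<Longrightarrow> wf f \<and> wf g \<and> cdom f = cdom g \<and> ccod f = ccod g \<and> interp f = interp g"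
proof (induction rule: ceq.induct)
  case (cong_seq f f' g g') then show ?case by (simp add: interp_seq)
next
  case (cong_par f f' g g') then show ?case by (simp add: interp_par)
next
  case (id_left f) then show ?case by (auto simp: interp_seq intro!: map_idI ev_id_nth set_interp_vars)
next
  case (id_right f) then show ?case by (auto simp: interp_seq length_interp[symmetric] o_def map_nth)
next
  case (seq_assoc f g h) then show ?case using seq_assoc_interp by auto
next
  case (par_assoc f g h) then show ?case by (simp add: interp_par sh_sh ac_simps)
next
  case (par_unit_left f) then show ?case by (simp add: interp_par sh_0 map_idI)
next
  case (par_unit_right f) then show ?case by (simp add: interp_par)
next
  case (par_id m n) then show ?case by (auto simp: interp_par nth_append intro!: nth_equalityI)
next
  case (interchange f g h k) then show ?case using interchange_interp by auto
next
  case (sw_inv m n) then show ?case using sw_inv_interp by auto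
next
  case (sw_hex1 m n k) then show ?case using sw_hex1_interp by auto
next
  case (sw_hex2 m n k) then show ?case using sw_hex2_interp by auto
next
  case (sw_nat f g) then show ?case using sw_nat_interp by auto
next
  case (copy_nat f) then show ?case using copy_nat_interp by (auto simp: copyn_wf)
next
  case (discard_nat f) then show ?case by (auto simp: discardn_wf interp_seq)
qed (auto simp: interp_seq interp_par ac_simps distrib_left)



lemmas [trans] = ceq.trans

lemma ceq_wf: assumes "ceq f g" shows "wf f" "wf g" "cdom f = cdom g" "ccod f = ccod g"
  using ceq_sound[OF assms] by auto

lemma ceq_symI: "ceq f g \<Longrightarrow> ceq g f" by (rule ceq.sym)

lemma c_id_left: "wf f \<Longrightarrow> cdom f = n \<Longrightarrow> ceq (Seq (Id n) f) f"
  using ceq.id_left by blast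
lemma c_id_right: "wf f \<Longrightarrow> ccod f = n \<Longrightarrow> ceq (Seq f (Id n)) f"
  using ceq.id_right by blast
lemma c_sw_nat: "wf f \<Longrightarrow> wf g \<Longrightarrow> cdom f = a \<Longrightarrow> cdom g = c \<Longrightarrow> ccod f = b \<Longrightarrow> ccod g = d \<Longrightarrow>
   ceq (Seq (Par f g) (Sw b d)) (Seq (Sw a c) (Par g f))"
  using ceq.sw_nat by blast
lemma c_copy_nat: "wf f \<Longrightarrow> cdom f = a \<Longrightarrow> ccod f = b \<Longrightarrow> ceq (Seq f (copyn b)) (Seq (copyn a) (Par f f))"
  using ceq.copy_nat by blast
lemma c_discard_nat: "wf f \<Longrightarrow> cdom f = a \<Longrightarrow> ccod f = b \<Longrightarrow> ceq (Seq f (discardn b)) (discardn a)"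
  using ceq.discard_nat by blast

lemma seqL: "ceq f f' \<Longrightarrow> wf g \<Longrightarrow> ccod f = cdom g \<Longrightarrow> ceq (Seq f g) (Seq f' g)"
  by (rule ceq.cong_seq) (auto intro: ceq.refl)
lemma seqR: "ceq g g' \<Longrightarrow> wf f \<Longrightarrow> ccod f = cdom g \<Longrightarrow> ceq (Seq f g) (Seq f g')"
  by (rule ceq.cong_seq) (auto intro: ceq.refl)
lemma parL: "ceq f f' \<Longrightarrow> wf g \<Longrightarrow> ceq (Par f g) (Par f' g)"
  by (rule ceq.cong_par) (auto intro: ceq.refl)
lemma parR: "ceq g g' \<Longrightarrow> wf f \<Longrightarrow> ceq (Par f g) (Par f g')"
  by (rule ceq.cong_par) (auto intro: ceq.refl)

lemma c_assoc: "wf f \<Longrightarrow> wf g \<Longrightarrow> wf h \<Longrightarrow> ccod f = cdom g \<Longrightarrow> ccod g = cdom h \<Longrightarrow>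
     ceq (Seq (Seq f g) h) (Seq f (Seq g h))"
  by (rule ceq.seq_assoc)
lemma c_assoc': "wf f \<Longrightarrow> wf g \<Longrightarrow> wf h \<Longrightarrow> ccod f = cdom g \<Longrightarrow> ccod g = cdom h \<Longrightarrow>
     ceq (Seq f (Seq g h)) (Seq (Seq f g) h)"
  by (rule ceq.sym, rule ceq.seq_assoc)
lemma c_passoc: "wf f \<Longrightarrow> wf g \<Longrightarrow> wf h \<Longrightarrow> ceq (Par (Par f g) h) (Par f (Par g h))"
  by (rule ceq.par_assoc)
lemma c_passoc': "wf f \<Longrightarrow> wf g \<Longrightarrow> wf h \<Longrightarrow> ceq (Par f (Par g h)) (Par (Par f g) h)"
  by (rule ceq.sym, rule ceq.par_assoc)
lemma c_inter: "wf f \<Longrightarrow> wf g \<Longrightarrow> wf h \<Longrightarrow> wf k \<Longrightarrow> ccod f = cdom g \<Longrightarrow> ccod h = cdom k \<Longrightarrow>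
     ceq (Par (Seq f g) (Seq h k)) (Seq (Par f h) (Par g k))"
  by (rule ceq.interchange)
lemma c_inter': "wf f \<Longrightarrow> wf g \<Longrightarrow> wf h \<Longrightarrow> wf k \<Longrightarrow> ccod f = cdom g \<Longrightarrow> ccod h = cdom k \<Longrightarrow>
     ceq (Seq (Par f h) (Par g k)) (Par (Seq f g) (Seq h k))"
  by (rule ceq.sym, rule ceq.interchange)

lemma c_refl: "wf f \<Longrightarrow> ceq f f" by (rule ceq.refl)

lemma hom_discardn [simp]: "wf (discardn n)" "cdom (discardn n) = n" "ccod (discardn n) = 0"
  using discardn_wf by auto
lemma hom_copyn [simp]: "wf (copyn n)" "cdom (copyn n) = n" "ccod (copyn n) = 2 * n"
  using copyn_wf by auto

lemma sw_0_idem: "ceq (Sw 0 k) (Seq (Sw 0 k) (Sw 0 k))"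
proof -
  have "ceq (Sw 0 k) (Seq (Par (Id 0) (Sw 0 k)) (Par (Sw 0 k) (Id 0)))"
    using ceq.sw_hex2[of 0 0 k] by simp
  also have "ceq \<dots> (Seq (Sw 0 k) (Sw 0 k))"
    by (rule ceq.cong_seq) (auto intro: ceq.par_unit_left ceq.par_unit_right)
  finally show ?thesis .
qed

lemma sw_0_id: "ceq (Sw 0 k) (Id k)"
proof -
  have "ceq (Sw 0 k) (Seq (Sw 0 k) (Id k))"
    by (rule ceq.sym, rule c_id_right) auto
  also have "ceq \<dots> (Seq (Sw 0 k) (Seq (Sw 0 k) (Sw k 0)))"
    by (rule seqR, rule ceq.sym) (use ceq.sw_inv[of 0 k] in auto)
  also have "ceq \<dots> (Seq (Seq (Sw 0 k) (Sw 0 k)) (Sw k 0))"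
    by (rule c_assoc') auto
  also have "ceq \<dots> (Seq (Sw 0 k) (Sw k 0))"
    by (rule seqL, rule ceq.sym, rule sw_0_idem) auto
  also have "ceq \<dots> (Id k)"
    using ceq.sw_inv[of 0 k] by simp
  finally show ?thesis .
qed

lemma sw_0_id': "ceq (Sw k 0) (Id k)"
proof -
  have "ceq (Sw k 0) (Seq (Sw k 0) (Id k))"
    by (rule ceq.sym, rule c_id_right) auto
  also have "ceq \<dots> (Seq (Sw k 0) (Sw 0 k))"
    by (rule seqR, rule ceq.sym, rule sw_0_id) auto
  also have "ceq \<dots> (Id k)"
    using ceq.sw_inv[of k 0] by simp
  finally show ?thesis .
qed

lemma discardn_add: "ceq (discardn (m + n)) (Par (discardn m) (discardn n))"
proof (induction m)
  case 0 then show ?case by (simp, rule ceq.sym, rule ceq.par_unit_left) simp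
next
  case (Suc m)
  have "ceq (discardn (Suc m + n)) (Par (Gen Discard) (Par (discardn m) (discardn n)))"
    by (simp, rule parR[OF Suc]) simp
  also have "ceq \<dots> (Par (discardn (Suc m)) (discardn n))"
    by (simp, rule c_passoc') auto
  finally show ?case .
qed

lemma copy_unit_r: "ceq (Seq (Gen Copy) (Par (Id 1) (Gen Discard))) (Id 1)"
proof -
  have "ceq (Seq (Gen Copy) (Par (Id 1) (Gen Discard))) (Seq (Seq (Gen Copy) (Sw 1 1)) (Par (Id 1) (Gen Discard)))"
    by (rule seqL, rule ceq.sym, rule ceq.copy_comm) auto
  also have "ceq \<dots> (Seq (Gen Copy) (Seq (Sw 1 1) (Par (Id 1) (Gen Discard))))"
    by (rule c_assoc) auto
  also have "ceq \<dots> (Seq (Gen Copy) (Seq (Par (Gen Discard) (Id 1)) (Sw 0 1)))"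
    by (rule seqR, rule ceq.sym, rule c_sw_nat) auto
  also have "ceq \<dots> (Seq (Gen Copy) (Seq (Par (Gen Discard) (Id 1)) (Id 1)))"
    by (rule seqR, rule seqR, rule sw_0_id) auto
  also have "ceq \<dots> (Seq (Gen Copy) (Par (Gen Discard) (Id 1)))"
    by (rule seqR, rule c_id_right) auto
  also have "ceq \<dots> (Id 1)"
    by (rule ceq.copy_unit)
  finally show ?thesis .
qed

lemma copy_step:
  assumes w: "wf h" "wf g" "wf h'" "wf g'"
    and d: "cdom h = 1" "cdom g = n" "cdom h' = 1" "cdom g' = n"
    and c: "ccod h = p" "ccod g = q" "ccod h' = p'" "ccod g' = q'"
  shows "ceq (Seq (copyn (Suc n)) (Par (Par h g) (Par h' g')))
             (Seq (Par (Seq (Gen Copy) (Par h h')) (Seq (copyn n) (Par g g'))) (Par (Par (Id p) (Sw p' q)) (Id q')))"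
proof -
  let ?A = "Par (Gen Copy) (copyn n)"
  let ?W = "Par (Par (Id 1) (Sw 1 n)) (Id n)"
  let ?M1 = "Par (Id p) (Sw p' q)"
  let ?M = "Par ?M1 (Id q')"
  have H1: "ceq (Par (Par h g) (Par h' g')) (Par (Par h (Par g h')) g')"
  proof -
    have "ceq (Par (Par h g) (Par h' g')) (Par (Par (Par h g) h') g')"
      by (rule c_passoc') (use w in auto)
    also have "ceq \<dots> (Par (Par h (Par g h')) g')"
      by (rule parL, rule c_passoc) (use w in auto)
    finally show ?thesis .
  qed
  have H2: "ceq (Seq (Par (Id 1) (Sw 1 n)) (Par h (Par g h'))) (Seq (Par h (Par h' g)) ?M1)"
  proof -
    have "ceq (Seq (Par (Id 1) (Sw 1 n)) (Par h (Par g h'))) (Par (Seq (Id 1) h) (Seq (Sw 1 n) (Par g h')))"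
      by (rule c_inter') (use w d in auto)
    also have "ceq \<dots> (Par (Seq h (Id p)) (Seq (Par h' g) (Sw p' q)))"
    proof (rule ceq.cong_par)
      show "ceq (Seq (Id 1) h) (Seq h (Id p))"
        by (rule ceq.trans[OF c_id_left ceq.sym[OF c_id_right]]) (use w d c in auto)
      show "ceq (Seq (Sw 1 n) (Par g h')) (Seq (Par h' g) (Sw p' q))"
        by (rule ceq.sym, rule c_sw_nat) (use w d c in auto)
    qed
    also have "ceq \<dots> (Seq (Par h (Par h' g)) ?M1)"
      by (rule c_inter) (use w d c in auto)
    finally show ?thesis .
  qed
  have H3: "ceq (Seq ?W (Par (Par h g) (Par h' g'))) (Seq (Par (Par h h') (Par g g')) ?M)"
  proof -
    have "ceq (Seq ?W (Par (Par h g) (Par h' g'))) (Seq ?W (Par (Par h (Par g h')) g'))"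
      by (rule seqR[OF H1]) (use w d c in auto)
    also have "ceq \<dots> (Par (Seq (Par (Id 1) (Sw 1 n)) (Par h (Par g h'))) (Seq (Id n) g'))"
      by (rule c_inter') (use w d c in auto)
    also have "ceq \<dots> (Par (Seq (Par h (Par h' g)) ?M1) (Seq g' (Id q')))"
      by (rule ceq.cong_par[OF H2], rule ceq.trans[OF c_id_left ceq.sym[OF c_id_right]]) (use w d c in auto)
    also have "ceq \<dots> (Seq (Par (Par h (Par h' g)) g') ?M)"
      by (rule c_inter) (use w d c in auto)
    also have "ceq \<dots> (Seq (Par (Par h h') (Par g g')) ?M)"
    proof (rule seqL)
      have "ceq (Par (Par h (Par h' g)) g') (Par (Par (Par h h') g) g')"
        by (rule parL, rule c_passoc') (use w in auto)
      also have "ceq \<dots> (Par (Par h h') (Par g g'))"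
        by (rule c_passoc) (use w in auto)
      finally show "ceq (Par (Par h (Par h' g)) g') (Par (Par h h') (Par g g'))" .
    qed (use w d c in auto)
    finally show ?thesis .
  qed
  have "ceq (Seq (copyn (Suc n)) (Par (Par h g) (Par h' g'))) (Seq ?A (Seq ?W (Par (Par h g) (Par h' g'))))"
    by (simp only: copyn.simps, rule c_assoc) (use w d c in auto)
  also have "ceq \<dots> (Seq ?A (Seq (Par (Par h h') (Par g g')) ?M))"
    by (rule seqR[OF H3]) (use w d c in auto)
  also have "ceq \<dots> (Seq (Seq ?A (Par (Par h h') (Par g g'))) ?M)"
    by (rule c_assoc') (use w d c in auto)
  also have "ceq \<dots> (Seq (Par (Seq (Gen Copy) (Par h h')) (Seq (copyn n) (Par g g'))) ?M)"
    by (rule seqL, rule c_inter') (use w d c in auto)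
  finally show ?thesis .
qed

lemma idpar: "ceq (Par (Id a) (Id b)) (Id (a + b))" by (rule ceq.par_id)
lemma idpar': "ceq (Id (a + b)) (Par (Id a) (Id b))" by (rule ceq.sym, rule ceq.par_id)

lemma counit_r: "ceq (Seq (copyn n) (Par (Id n) (discardn n))) (Id n)"
proof (induction n)
  case 0
  have "ceq (Seq (Id 0) (Par (Id 0) (Id 0))) (Par (Id 0) (Id 0))" by (rule c_id_left) auto
  also have "ceq \<dots> (Id 0)" using idpar[of 0 0] by simp
  finally show ?case by simp
next
  case (Suc n)
  have "ceq (Seq (copyn (Suc n)) (Par (Id (Suc n)) (discardn (Suc n))))
            (Seq (copyn (Suc n)) (Par (Par (Id 1) (Id n)) (Par (Gen Discard) (discardn n))))"
    by (simp only: discardn.simps, rule seqR, rule parL) (use idpar'[of 1 n] in auto)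
  also have "ceq \<dots> (Seq (Par (Seq (Gen Copy) (Par (Id 1) (Gen Discard))) (Seq (copyn n) (Par (Id n) (discardn n))))
      (Par (Par (Id 1) (Sw 0 n)) (Id 0)))"
    by (rule copy_step) auto
  also have "ceq \<dots> (Seq (Par (Id 1) (Id n)) (Par (Par (Id 1) (Id n)) (Id 0)))"
    by (rule ceq.cong_seq, rule ceq.cong_par[OF copy_unit_r Suc], rule parL, rule parR, rule sw_0_id) auto
  also have "ceq \<dots> (Seq (Par (Id 1) (Id n)) (Id (Suc n)))"
    by (rule seqR, rule ceq.trans[OF ceq.par_unit_right]) (use idpar[of 1 n] in auto)
  also have "ceq \<dots> (Id (Suc n))"
    by (rule ceq.trans[OF c_id_right]) (use idpar[of 1 n] in auto)
  finally show ?case .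
qed

lemma counit_l: "ceq (Seq (copyn n) (Par (discardn n) (Id n))) (Id n)"
proof (induction n)
  case 0
  have "ceq (Seq (Id 0) (Par (Id 0) (Id 0))) (Par (Id 0) (Id 0))" by (rule c_id_left) auto
  also have "ceq \<dots> (Id 0)" using idpar[of 0 0] by simp
  finally show ?case by simp
next
  case (Suc n)
  have "ceq (Seq (copyn (Suc n)) (Par (discardn (Suc n)) (Id (Suc n))))
            (Seq (copyn (Suc n)) (Par (Par (Gen Discard) (discardn n)) (Par (Id 1) (Id n))))"
    by (simp only: discardn.simps, rule seqR, rule parR) (use idpar'[of 1 n] in auto)
  also have "ceq \<dots> (Seq (Par (Seq (Gen Copy) (Par (Gen Discard) (Id 1))) (Seq (copyn n) (Par (discardn n) (Id n))))
      (Par (Par (Id 0) (Sw 1 0)) (Id n)))"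
    by (rule copy_step) auto
  also have "ceq \<dots> (Seq (Par (Id 1) (Id n)) (Par (Id 1) (Id n)))"
    by (rule ceq.cong_seq, rule ceq.cong_par[OF ceq.copy_unit Suc], rule parL,
        rule ceq.trans[OF ceq.par_unit_left sw_0_id']) auto
  also have "ceq \<dots> (Seq (Par (Id 1) (Id n)) (Id (Suc n)))"
    by (rule seqR) (use idpar[of 1 n] in auto)
  also have "ceq \<dots> (Id (Suc n))"
    by (rule ceq.trans[OF c_id_right]) (use idpar[of 1 n] in auto)
  finally show ?case .
qed



definition proj :: "nat \<Rightarrow> nat \<Rightarrow> circ" where
  "proj n i = Par (discardn i) (Par (Id 1) (discardn (n - Suc i)))"

lemma hom_proj [simp]: "wf (proj n i)" "ccod (proj n i) = 1" "i < n \<Longrightarrow> cdom (proj n i) = n"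
  by (auto simp: proj_def)

fun tup :: "nat \<Rightarrow> circ list \<Rightarrow> circ" where
  "tup a [] = discardn a"
| "tup a (h # hs) = Seq (copyn a) (Par h (tup a hs))"

definition homs :: "circ list \<Rightarrow> nat \<Rightarrow> bool" where
  "homs hs a \<longleftrightarrow> (\<forall>h\<in>set hs. wf h \<and> cdom h = a \<and> ccod h = 1)"

lemma homs_simps [simp]: "homs [] a" "homs (h # hs) a \<longleftrightarrow> wf h \<and> cdom h = a \<and> ccod h = 1 \<and> homs hs a"
  by (auto simp: homs_def)

lemma hom_tup: "homs hs a \<Longrightarrow> wf (tup a hs) \<and> cdom (tup a hs) = a \<and> ccod (tup a hs) = length hs"
  by (induction hs) auto

lemma hom_tup' [simp]: "homs hs a \<Longrightarrow> wf (tup a hs)" "homs hs a \<Longrightarrow> cdom (tup a hs) = a"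
   "homs hs a \<Longrightarrow> ccod (tup a hs) = length hs"
  using hom_tup by auto

lemma tup_nat:
  assumes "wf f" "cdom f = a" "ccod f = b" "homs hs b"
  shows "ceq (Seq f (tup b hs)) (tup a (map (Seq f) hs))"
  using assms(4)
proof (induction hs)
  case Nil then show ?case using assms by (simp, intro c_discard_nat) auto
next
  case (Cons h hs)
  let ?T = "tup b hs"
  have "ceq (Seq f (tup b (h # hs))) (Seq (Seq f (copyn b)) (Par h ?T))"
    by (simp only: tup.simps, rule c_assoc') (use assms Cons in auto)
  also have "ceq \<dots> (Seq (Seq (copyn a) (Par f f)) (Par h ?T))"
    by (rule seqL, rule c_copy_nat) (use assms Cons in auto)
  also have "ceq \<dots> (Seq (copyn a) (Seq (Par f f) (Par h ?T)))"
    by (rule c_assoc) (use assms Cons in auto)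
  also have "ceq \<dots> (Seq (copyn a) (Par (Seq f h) (Seq f ?T)))"
    by (rule seqR, rule c_inter') (use assms Cons in auto)
  also have "ceq \<dots> (Seq (copyn a) (Par (Seq f h) (tup a (map (Seq f) hs))))"
    by (rule seqR, rule parR) (use assms Cons in auto)
  finally show ?case by simp
qed

lemma copy_drop_r:
  assumes "wf u" "cdom u = a"
  shows "ceq (Seq (copyn a) (Par u (discardn a))) u"
proof -
  have "ceq (Par u (discardn a)) (Par (Seq (Id a) u) (Seq (discardn a) (Id 0)))"
    by (rule ceq.cong_par[OF ceq.sym[OF c_id_left] ceq.sym[OF c_id_right]]) (use assms in auto)
  then have "ceq (Seq (copyn a) (Par u (discardn a))) (Seq (copyn a) (Par (Seq (Id a) u) (Seq (discardn a) (Id 0))))"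
    by (rule seqR) (use assms in auto)
  also have "ceq \<dots> (Seq (copyn a) (Seq (Par (Id a) (discardn a)) (Par u (Id 0))))"
    by (rule seqR, rule c_inter) (use assms in auto)
  also have "ceq \<dots> (Seq (Seq (copyn a) (Par (Id a) (discardn a))) (Par u (Id 0)))"
    by (rule c_assoc') (use assms in auto)
  also have "ceq \<dots> (Seq (Id a) (Par u (Id 0)))"
    by (rule seqL, rule counit_r) (use assms in auto)
  also have "ceq \<dots> (Par u (Id 0))"
    by (rule c_id_left) (use assms in auto)
  also have "ceq \<dots> u"
    by (rule ceq.par_unit_right) (use assms in auto)
  finally show ?thesis .
qed

lemma copy_drop_l:
  assumes "wf u" "cdom u = a"
  shows "ceq (Seq (copyn a) (Par (discardn a) u)) u"
proof -
  have "ceq (Par (discardn a) u) (Par (Seq (discardn a) (Id 0)) (Seq (Id a) u))"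
    by (rule ceq.cong_par[OF ceq.sym[OF c_id_right] ceq.sym[OF c_id_left]]) (use assms in auto)
  then have "ceq (Seq (copyn a) (Par (discardn a) u)) (Seq (copyn a) (Par (Seq (discardn a) (Id 0)) (Seq (Id a) u)))"
    by (rule seqR) (use assms in auto)
  also have "ceq \<dots> (Seq (copyn a) (Seq (Par (discardn a) (Id a)) (Par (Id 0) u)))"
    by (rule seqR, rule c_inter) (use assms in auto)
  also have "ceq \<dots> (Seq (Seq (copyn a) (Par (discardn a) (Id a))) (Par (Id 0) u))"
    by (rule c_assoc') (use assms in auto)
  also have "ceq \<dots> (Seq (Id a) (Par (Id 0) u))"
    by (rule seqL, rule counit_l) (use assms in auto)
  also have "ceq \<dots> (Par (Id 0) u)"
    by (rule c_id_left) (use assms in auto)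
  also have "ceq \<dots> u"
    by (rule ceq.par_unit_left) (use assms in auto)
  finally show ?thesis .
qed

lemma discard1: "wf h \<Longrightarrow> cdom h = a \<Longrightarrow> ccod h = 1 \<Longrightarrow> ceq (Seq h (Gen Discard)) (discardn a)"
proof -
  assume h: "wf h" "cdom h = a" "ccod h = 1"
  have "ceq (Seq h (Gen Discard)) (Seq h (discardn 1))"
    by (rule seqR) (use h ceq.sym[OF ceq.par_unit_right[of "Gen Discard"]] in auto)
  also have "ceq \<dots> (discardn a)" by (rule c_discard_nat) (use h in auto)
  finally show ?thesis .
qed

lemma tup_proj:
  assumes "homs hs a" "j < length hs"
  shows "ceq (Seq (tup a hs) (proj (length hs) j)) (hs ! j)"
  using assms
proof (induction hs arbitrary: j)
  case Nil then show ?case by simp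
next
  case (Cons h hs)
  let ?T = "tup a hs"
  let ?k = "length hs"
  show ?case
  proof (cases j)
    case 0
    have "ceq (Seq (tup a (h # hs)) (proj (Suc ?k) j)) (Seq (copyn a) (Seq (Par h ?T) (Par (Id 0) (Par (Id 1) (discardn ?k)))))"
      by (simp only: tup.simps proj_def 0, simp, rule c_assoc) (use Cons in auto)
    also have "ceq \<dots> (Seq (copyn a) (Seq (Par h ?T) (Par (Id 1) (discardn ?k))))"
      by (rule seqR, rule seqR, rule ceq.par_unit_left) (use Cons in auto)
    also have "ceq \<dots> (Seq (copyn a) (Par (Seq h (Id 1)) (Seq ?T (discardn ?k))))"
      by (rule seqR, rule c_inter') (use Cons in auto)
    also have "ceq \<dots> (Seq (copyn a) (Par h (discardn a)))"
      by (rule seqR, rule ceq.cong_par[OF c_id_right c_discard_nat]) (use Cons in auto)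
    also have "ceq \<dots> h"
      by (rule copy_drop_r) (use Cons in auto)
    finally show ?thesis using 0 by simp
  next
    case (Suc j')
    have "ceq (Seq (tup a (h # hs)) (proj (Suc ?k) j)) (Seq (copyn a) (Seq (Par h ?T) (Par (Par (Gen Discard) (discardn j')) (Par (Id 1) (discardn (?k - Suc j'))))))"
      by (simp only: tup.simps proj_def Suc, simp, rule c_assoc) (use Cons Suc in auto)
    also have "ceq \<dots> (Seq (copyn a) (Seq (Par h ?T) (Par (Gen Discard) (proj ?k j'))))"
      by (rule seqR, rule seqR, unfold proj_def, rule c_passoc) (use Cons Suc in auto)
    also have "ceq \<dots> (Seq (copyn a) (Par (Seq h (Gen Discard)) (Seq ?T (proj ?k j'))))"
      by (rule seqR, rule c_inter') (use Cons Suc in auto)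
    also have "ceq \<dots> (Seq (copyn a) (Par (discardn a) (hs ! j')))"
      by (rule seqR, rule ceq.cong_par[OF discard1 Cons.IH]) (use Cons Suc in auto)
    also have "ceq \<dots> (hs ! j')"
      by (rule copy_drop_l) (use Cons Suc in \<open>auto simp: homs_def\<close>)
    finally show ?thesis using Suc by simp
  qed
qed

lemma cdom_tup [simp]: "cdom (tup a hs) = a"
  by (cases hs) auto

lemma tup_cong:
  assumes "\<And>x. x \<in> set xs \<Longrightarrow> ceq (F x) (G x)" "\<And>x. x \<in> set xs \<Longrightarrow> cdom (F x) = a"
  shows "ceq (tup a (map F xs)) (tup a (map G xs))"
  using assms
proof (induction xs)
  case Nil then show ?case by (simp add: c_refl)
next
  case (Cons x xs)
  then show ?case by (simp, intro seqR parL ceq.cong_par) auto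
qed

lemma proj_suc:
  assumes "j < b"
  shows "ceq (proj (Suc b) (Suc j)) (Seq (Par (Gen Discard) (Id b)) (proj b j))"
proof -
  have "ceq (proj (Suc b) (Suc j)) (Par (Gen Discard) (proj b j))"
    unfolding proj_def by (simp, rule c_passoc) auto
  also have "ceq \<dots> (Par (Seq (Gen Discard) (Id 0)) (Seq (Id b) (proj b j)))"
    by (rule ceq.cong_par[OF ceq.sym[OF c_id_right] ceq.sym[OF c_id_left]]) (use assms in auto)
  also have "ceq \<dots> (Seq (Par (Gen Discard) (Id b)) (Par (Id 0) (proj b j)))"
    by (rule c_inter) (use assms in auto)
  also have "ceq \<dots> (Seq (Par (Gen Discard) (Id b)) (proj b j))"
    by (rule seqR, rule ceq.par_unit_left) (use assms in auto)
  finally show ?thesis .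
qed

lemma homs_map_proj: "homs (map (proj b) [0..<b]) b"
  by (auto simp: homs_def)

lemma tup_eta: "ceq (tup b (map (proj b) [0..<b])) (Id b)"
proof (induction b)
  case 0 then show ?case by (simp add: c_refl)
next
  case (Suc b)
  let ?D = "Par (Gen Discard) (Id b)"
  have e: "map (proj (Suc b)) [0..<Suc b] = proj (Suc b) 0 # map (\<lambda>j. proj (Suc b) (Suc j)) [0..<b]"
    by (simp add: upt_conv_Cons map_Suc_upt[symmetric] del: upt_Suc)
  have R: "ceq (tup (Suc b) (map (\<lambda>j. proj (Suc b) (Suc j)) [0..<b])) ?D"
  proof -
    have "ceq (tup (Suc b) (map (\<lambda>j. proj (Suc b) (Suc j)) [0..<b])) (tup (Suc b) (map (\<lambda>j. Seq ?D (proj b j)) [0..<b]))"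
      by (rule tup_cong) (auto intro: proj_suc)
    also have "ceq \<dots> (Seq ?D (tup b (map (proj b) [0..<b])))"
      by (rule ceq.sym) (use tup_nat[of ?D "Suc b" b "map (proj b) [0..<b]"] in \<open>auto simp: homs_map_proj o_def\<close>)
    also have "ceq \<dots> (Seq ?D (Id b))"
      by (rule seqR[OF Suc]) auto
    also have "ceq \<dots> ?D"
      by (rule c_id_right) auto
    finally show ?thesis .
  qed
  have "ceq (tup (Suc b) (map (proj (Suc b)) [0..<Suc b]))
        (Seq (copyn (Suc b)) (Par (Par (Id 1) (discardn b)) ?D))"
    unfolding e tup.simps
    by (rule seqR, rule ceq.cong_par[OF _ R]) (auto simp: proj_def intro: ceq.par_unit_left)
  also have "ceq \<dots> (Seq (Par (Seq (Gen Copy) (Par (Id 1) (Gen Discard))) (Seq (copyn b) (Par (discardn b) (Id b))))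
      (Par (Par (Id 1) (Sw 0 0)) (Id b)))"
    by (rule copy_step) auto
  also have "ceq \<dots> (Seq (Par (Id 1) (Id b)) (Par (Par (Id 1) (Id 0)) (Id b)))"
    by (rule ceq.cong_seq, rule ceq.cong_par[OF copy_unit_r counit_l], rule parL, rule parR, rule sw_0_id) auto
  also have "ceq \<dots> (Seq (Par (Id 1) (Id b)) (Par (Id 1) (Id b)))"
    by (rule seqR, rule parL, rule ceq.par_unit_right) auto
  also have "ceq \<dots> (Seq (Par (Id 1) (Id b)) (Id (Suc b)))"
    by (rule seqR) (use idpar[of 1 b] in auto)
  also have "ceq \<dots> (Id (Suc b))"
    by (rule ceq.trans[OF c_id_right]) (use idpar[of 1 b] in auto)
  finally show ?case .
qed



datatype expr = Var nat | Zr | On | Pl expr expr | Ml expr expr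

fun evb :: "nat \<Rightarrow> expr \<Rightarrow> bool" where
  "evb a (Var i) = (i < a)"
| "evb a Zr = True"
| "evb a On = True"
| "evb a (Pl e1 e2) = (evb a e1 \<and> evb a e2)"
| "evb a (Ml e1 e2) = (evb a e1 \<and> evb a e2)"

fun esubst :: "expr list \<Rightarrow> expr \<Rightarrow> expr" where
  "esubst es (Var i) = es ! i"
| "esubst es Zr = Zr"
| "esubst es On = On"
| "esubst es (Pl e1 e2) = Pl (esubst es e1) (esubst es e2)"
| "esubst es (Ml e1 e2) = Ml (esubst es e1) (esubst es e2)"

fun epoly :: "expr \<Rightarrow> zpoly" where
  "epoly (Var i) = X i"
| "epoly Zr = 0"
| "epoly On = 1"
| "epoly (Pl e1 e2) = epoly e1 + epoly e2"
| "epoly (Ml e1 e2) = epoly e1 * epoly e2"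

fun tc :: "nat \<Rightarrow> expr \<Rightarrow> circ" where
  "tc a (Var i) = (if i < a then proj a i else Seq (discardn a) (Gen Zero))"
| "tc a Zr = Seq (discardn a) (Gen Zero)"
| "tc a On = Seq (discardn a) (Gen One)"
| "tc a (Pl e1 e2) = Seq (Seq (copyn a) (Par (tc a e1) (tc a e2))) (Gen Add)"
| "tc a (Ml e1 e2) = Seq (Seq (copyn a) (Par (tc a e1) (tc a e2))) (Gen And)"

lemma hom_tc [simp]: "wf (tc a e)" "cdom (tc a e) = a" "ccod (tc a e) = 1"
  by (induction e) auto

lemma esubst_id: "evb a e \<Longrightarrow> esubst (map Var [0..<a]) e = e"
  by (induction e) auto

lemma evb_esubst: "evb b e \<Longrightarrow> length es = b \<Longrightarrow> (\<forall>j<b. evb a (es ! j)) \<Longrightarrow> evb a (esubst es e)"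
  by (induction e) auto

lemma seq_bin:
  assumes f: "wf f" "cdom f = a" "ccod f = b"
    and t: "wf t1" "cdom t1 = b" "ccod t1 = 1" "wf t2" "cdom t2 = b" "ccod t2 = 1"
    and u: "ceq (Seq f t1) u1" "ceq (Seq f t2) u2"
    and G: "gdom G = 2"
  shows "ceq (Seq f (Seq (Seq (copyn b) (Par t1 t2)) (Gen G))) (Seq (Seq (copyn a) (Par u1 u2)) (Gen G))"
proof -
  have w: "wf u1" "cdom u1 = a" "ccod u1 = 1" "wf u2" "cdom u2 = a" "ccod u2 = 1"
    using ceq_wf[OF u(1)] ceq_wf[OF u(2)] f t by auto
  let ?P = "Par t1 t2"
  have "ceq (Seq f (Seq (Seq (copyn b) ?P) (Gen G))) (Seq (Seq f (Seq (copyn b) ?P)) (Gen G))"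
    by (rule c_assoc') (use f t G in auto)
  also have "ceq (Seq f (Seq (copyn b) ?P)) (Seq (copyn a) (Par u1 u2))"
  proof -
    have "ceq (Seq f (Seq (copyn b) ?P)) (Seq (Seq f (copyn b)) ?P)"
      by (rule c_assoc') (use f t in auto)
    also have "ceq \<dots> (Seq (Seq (copyn a) (Par f f)) ?P)"
      by (rule seqL, rule c_copy_nat) (use f t in auto)
    also have "ceq \<dots> (Seq (copyn a) (Seq (Par f f) ?P))"
      by (rule c_assoc) (use f t in auto)
    also have "ceq \<dots> (Seq (copyn a) (Par (Seq f t1) (Seq f t2)))"
      by (rule seqR, rule c_inter') (use f t in auto)
    also have "ceq \<dots> (Seq (copyn a) (Par u1 u2))"
      by (rule seqR, rule ceq.cong_par[OF u]) (use f t in auto)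
    finally show ?thesis .
  qed
  then have "ceq (Seq (Seq f (Seq (copyn b) ?P)) (Gen G)) (Seq (Seq (copyn a) (Par u1 u2)) (Gen G))"
    by (rule seqL) (use f t G in auto)
  finally show ?thesis .
qed

lemma seq_tc:
  assumes f: "wf f" "cdom f = a" "ccod f = b"
    and es: "length es = b" "\<And>j. j < b \<Longrightarrow> ceq (Seq f (proj b j)) (tc a (es ! j))"
  shows "evb b d \<Longrightarrow> ceq (Seq f (tc b d)) (tc a (esubst es d))"
proof (induction d)
  case (Var j) then show ?case using es by simp
next
  case Zr
  have "ceq (Seq f (Seq (discardn b) (Gen Zero))) (Seq (Seq f (discardn b)) (Gen Zero))"
    by (rule c_assoc') (use f in auto)
  also have "ceq \<dots> (Seq (discardn a) (Gen Zero))"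
    by (rule seqL, rule c_discard_nat) (use f in auto)
  finally show ?case by simp
next
  case On
  have "ceq (Seq f (Seq (discardn b) (Gen One))) (Seq (Seq f (discardn b)) (Gen One))"
    by (rule c_assoc') (use f in auto)
  also have "ceq \<dots> (Seq (discardn a) (Gen One))"
    by (rule seqL, rule c_discard_nat) (use f in auto)
  finally show ?case by simp
next
  case (Pl d1 d2) then show ?case by (simp, intro seq_bin) (use f in auto)
next
  case (Ml d1 d2) then show ?case by (simp, intro seq_bin) (use f in auto)
qed



fun ex :: "circ \<Rightarrow> nat \<Rightarrow> expr" where
  "ex (Gen g) i = (case g of Copy \<Rightarrow> Var 0 | Zero \<Rightarrow> Zr | One \<Rightarrow> On
      | Add \<Rightarrow> Pl (Var 0) (Var 1) | And \<Rightarrow> Ml (Var 0) (Var 1) | Discard \<Rightarrow> Zr)"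
| "ex (Id n) i = Var i"
| "ex (Sw m n) i = (if i < n then Var (m + i) else Var (i - n))"
| "ex (Seq f g) i = esubst (map (ex f) [0..<ccod f]) (ex g i)"
| "ex (Par f g) i = (if i < ccod f then ex f i
      else esubst (map (\<lambda>j. Var (cdom f + j)) [0..<cdom g]) (ex g (i - ccod f)))"

lemma evb_mono: "evb a e \<Longrightarrow> a \<le> a' \<Longrightarrow> evb a' e"
  by (induction e) auto

lemma ex_evb: "wf f \<Longrightarrow> i < ccod f \<Longrightarrow> evb (cdom f) (ex f i)"
proof (induction f arbitrary: i)
  case (Gen g) then show ?case by (cases g) auto
next
  case (Seq f g) then show ?case by (auto intro!: evb_esubst)
next
  case (Par f g)
  show ?case
  proof (cases "i < ccod f")
    case True then show ?thesis using Par by (auto intro: evb_mono[OF _ le_add1])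
  qed (use Par in \<open>auto intro!: evb_esubst\<close>)
qed auto

lemma proj10: "ceq (proj 1 0) (Id 1)"
proof -
  have "ceq (proj 1 0) (Par (Id 0) (Id 1))"
    unfolding proj_def by (simp, rule parR, rule ceq.par_unit_right) auto
  also have "ceq \<dots> (Id 1)" by (rule ceq.par_unit_left) auto
  finally show ?thesis .
qed

lemma proj_split_l:
  assumes "i < n"
  shows "ceq (Par (proj n i) (discardn m)) (proj (n + m) i)"
proof -
  have "ceq (Par (proj n i) (discardn m)) (Par (discardn i) (Par (Par (Id 1) (discardn (n - Suc i))) (discardn m)))"
    unfolding proj_def by (rule c_passoc) auto
  also have "ceq \<dots> (Par (discardn i) (Par (Id 1) (Par (discardn (n - Suc i)) (discardn m))))"
    by (rule parR, rule c_passoc) auto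
  also have "ceq \<dots> (Par (discardn i) (Par (Id 1) (discardn (n - Suc i + m))))"
    by (rule parR, rule parR, rule ceq.sym, rule discardn_add) auto
  also have "Par (discardn i) (Par (Id 1) (discardn (n - Suc i + m))) = proj (n + m) i"
    unfolding proj_def using assms by (simp add: Suc_diff_le)
  finally show ?thesis .
qed

lemma proj_split_r:
  assumes "k < m"
  shows "ceq (Par (discardn n) (proj m k)) (proj (n + m) (n + k))"
proof -
  have "ceq (Par (discardn n) (proj m k)) (Par (Par (discardn n) (discardn k)) (Par (Id 1) (discardn (m - Suc k))))"
    unfolding proj_def by (rule c_passoc') auto
  also have "ceq \<dots> (Par (discardn (n + k)) (Par (Id 1) (discardn (m - Suc k))))"
    by (rule parL, rule ceq.sym, rule discardn_add) auto
  also have "Par (discardn (n + k)) (Par (Id 1) (discardn (m - Suc k))) = proj (n + m) (n + k)"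
    unfolding proj_def using assms by simp
  finally show ?thesis .
qed

lemma weakL:
  assumes "wf u" "cdom u = a"
  shows "ceq (Par u (discardn c)) (Seq (Par (Id a) (discardn c)) u)"
proof -
  have "ceq (Par u (discardn c)) (Par (Seq (Id a) u) (Seq (discardn c) (Id 0)))"
    by (rule ceq.cong_par[OF ceq.sym[OF c_id_left] ceq.sym[OF c_id_right]]) (use assms in auto)
  also have "ceq \<dots> (Seq (Par (Id a) (discardn c)) (Par u (Id 0)))"
    by (rule c_inter) (use assms in auto)
  also have "ceq \<dots> (Seq (Par (Id a) (discardn c)) u)"
    by (rule seqR, rule ceq.par_unit_right) (use assms in auto)
  finally show ?thesis .
qed

lemma weakR:
  assumes "wf u" "cdom u = c"
  shows "ceq (Par (discardn a) u) (Seq (Par (discardn a) (Id c)) u)"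
proof -
  have "ceq (Par (discardn a) u) (Par (Seq (discardn a) (Id 0)) (Seq (Id c) u))"
    by (rule ceq.cong_par[OF ceq.sym[OF c_id_right] ceq.sym[OF c_id_left]]) (use assms in auto)
  also have "ceq \<dots> (Seq (Par (discardn a) (Id c)) (Par (Id 0) u))"
    by (rule c_inter) (use assms in auto)
  also have "ceq \<dots> (Seq (Par (discardn a) (Id c)) u)"
    by (rule seqR, rule ceq.par_unit_left) (use assms in auto)
  finally show ?thesis .
qed

lemma tup2:
  assumes "wf h2" "cdom h2 = a" "wf h1" "cdom h1 = a"
  shows "ceq (Seq (copyn a) (Par h1 h2)) (tup a [h1, h2])"
  by (simp, rule seqR, rule parR, rule ceq.sym, rule copy_drop_r) (use assms in auto)

lemma copy_proj2: "ceq (Seq (copyn 2) (Par (proj 2 0) (proj 2 1))) (Id 2)"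
proof -
  have "ceq (Seq (copyn 2) (Par (proj 2 0) (proj 2 1))) (tup 2 [proj 2 0, proj 2 1])"
    by (rule tup2) auto
  also have "tup 2 [proj 2 0, proj 2 1] = tup 2 (map (proj 2) [0..<2])"
    by (simp add: upt_rec)
  also have "ceq \<dots> (Id 2)" by (rule tup_eta)
  finally show ?thesis .
qed

lemma gen_bin:
  assumes "gdom G = 2" "gcod G = 1"
  shows "ceq (Seq (Gen G) (proj 1 0)) (Seq (Seq (copyn 2) (Par (proj 2 0) (proj 2 1))) (Gen G))"
proof -
  have "ceq (Seq (Gen G) (proj 1 0)) (Seq (Gen G) (Id 1))"
    by (rule seqR[OF proj10]) (use assms in auto)
  also have "ceq \<dots> (Gen G)" by (rule c_id_right) (use assms in auto)
  also have "ceq \<dots> (Seq (Id 2) (Gen G))" by (rule ceq.sym, rule c_id_left) (use assms in auto)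
  also have "ceq \<dots> (Seq (Seq (copyn 2) (Par (proj 2 0) (proj 2 1))) (Gen G))"
    by (rule seqL, rule ceq.sym, rule copy_proj2) (use assms in auto)
  finally show ?thesis .
qed

lemma gen_const:
  assumes "gdom G = 0" "gcod G = 1"
  shows "ceq (Seq (Gen G) (proj 1 0)) (Seq (discardn 0) (Gen G))"
proof -
  have "ceq (Seq (Gen G) (proj 1 0)) (Seq (Gen G) (Id 1))"
    by (rule seqR[OF proj10]) (use assms in auto)
  also have "ceq \<dots> (Gen G)" by (rule c_id_right) (use assms in auto)
  also have "ceq \<dots> (Seq (Id 0) (Gen G))" by (rule ceq.sym, rule c_id_left) (use assms in auto)
  finally show ?thesis by simp
qed

lemma copy_proj0: "ceq (Seq (Gen Copy) (proj 2 0)) (proj 1 0)"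
proof -
  have "ceq (Seq (Gen Copy) (proj 2 0)) (Seq (Gen Copy) (Par (Id 1) (Gen Discard)))"
  proof -
    have e: "proj 2 0 = Par (Id 0) (Par (Id 1) (Par (Gen Discard) (Id 0)))"
      by (simp add: proj_def numeral_2_eq_2)
    show ?thesis unfolding e
    proof (rule seqR)
      have "ceq (Par (Id 0) (Par (Id 1) (Par (Gen Discard) (Id 0)))) (Par (Id 1) (Par (Gen Discard) (Id 0)))"
        by (rule ceq.par_unit_left) auto
      also have "ceq \<dots> (Par (Id 1) (Gen Discard))"
        by (rule parR, rule ceq.par_unit_right) auto
      finally show "ceq (Par (Id 0) (Par (Id 1) (Par (Gen Discard) (Id 0)))) (Par (Id 1) (Gen Discard))" .
    qed auto
  qed
  also have "ceq \<dots> (Id 1)" by (rule copy_unit_r)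
  also have "ceq \<dots> (proj 1 0)" by (rule ceq.sym, rule proj10)
  finally show ?thesis .
qed

lemma copy_proj1: "ceq (Seq (Gen Copy) (proj 2 1)) (proj 1 0)"
proof -
  have "ceq (Seq (Gen Copy) (proj 2 1)) (Seq (Gen Copy) (Par (Gen Discard) (Id 1)))"
  proof -
    have e: "proj 2 1 = Par (Par (Gen Discard) (Id 0)) (Par (Id 1) (Id 0))"
      by (simp add: proj_def numeral_2_eq_2)
    show ?thesis unfolding e
      by (rule seqR, rule ceq.cong_par[OF ceq.par_unit_right ceq.par_unit_right]) auto
  qed
  also have "ceq \<dots> (Id 1)" by (rule ceq.copy_unit)
  also have "ceq \<dots> (proj 1 0)" by (rule ceq.sym, rule proj10)
  finally show ?thesis .
qed



lemma comp_Sw: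
  assumes "i < n + m"
  shows "ceq (Seq (Sw m n) (proj (n + m) i)) (tc (m + n) (ex (Sw m n) i))"
proof (cases "i < n")
  case True
  have "ceq (Seq (Sw m n) (proj (n + m) i)) (Seq (Sw m n) (Par (proj n i) (discardn m)))"
    by (rule seqR, rule ceq.sym, rule proj_split_l) (use True in auto)
  also have "ceq \<dots> (Seq (Par (discardn m) (proj n i)) (Sw 0 1))"
    by (rule ceq.sym, rule c_sw_nat) (use True in auto)
  also have "ceq \<dots> (Seq (Par (discardn m) (proj n i)) (Id 1))"
    by (rule seqR, rule sw_0_id) (use True in auto)
  also have "ceq \<dots> (Par (discardn m) (proj n i))"
    by (rule c_id_right) auto
  also have "ceq \<dots> (proj (m + n) (m + i))"
    by (rule proj_split_r) (use True in auto)
  finally show ?thesis using True by simp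
next
  case False
  define k where "k = i - n"
  have k: "i = n + k" "k < m" using False assms by (auto simp: k_def)
  have "ceq (Seq (Sw m n) (proj (n + m) i)) (Seq (Sw m n) (Par (discardn n) (proj m k)))"
    by (rule seqR, rule ceq.sym) (use proj_split_r[OF k(2), of n] k in auto)
  also have "ceq \<dots> (Seq (Par (proj m k) (discardn n)) (Sw 1 0))"
    by (rule ceq.sym, rule c_sw_nat) (use k in auto)
  also have "ceq \<dots> (Seq (Par (proj m k) (discardn n)) (Id 1))"
    by (rule seqR, rule sw_0_id') (use k in auto)
  also have "ceq \<dots> (Par (proj m k) (discardn n))"
    by (rule c_id_right) auto
  also have "ceq \<dots> (proj (m + n) k)"
    by (rule proj_split_l) (use k in auto)
  finally show ?thesis using k by simp
qed

lemma comp_ex: "wf f \<Longrightarrow> i < ccod f \<Longrightarrow> ceq (Seq f (proj (ccod f) i)) (tc (cdom f) (ex f i))"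
proof (induction f arbitrary: i)
  case (Gen g)
  show ?case
  proof (cases g)
    case Copy
    then have "i = 0 \<or> i = 1" using Gen by auto
    then show ?thesis using Copy copy_proj0 copy_proj1 by auto
  next
    case Zero then show ?thesis using Gen gen_const[of Zero] by auto
  next
    case One then show ?thesis using Gen gen_const[of One] by auto
  next
    case Add then show ?thesis using Gen gen_bin[of Add] by auto
  next
    case And then show ?thesis using Gen gen_bin[of And] by auto
  qed (use Gen in auto)
next
  case (Id n)
  have "ceq (Seq (Id n) (proj n i)) (proj n i)" by (rule c_id_left) (use Id in auto)
  then show ?case using Id by simp
next
  case (Sw m n) then show ?case using comp_Sw by simp
next
  case (Seq f g)
  let ?a = "cdom f" and ?b = "ccod f" and ?c = "ccod g"
  have w: "wf f" "wf g" "?b = cdom g" "i < ?c" using Seq.prems by auto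
  have "ceq (Seq (Seq f g) (proj ?c i)) (Seq f (Seq g (proj ?c i)))"
    by (rule c_assoc) (use w in auto)
  also have "ceq \<dots> (Seq f (tc ?b (ex g i)))"
  proof (rule seqR)
    show "ceq (Seq g (proj ?c i)) (tc ?b (ex g i))" using Seq.IH(2)[of i] w by simp
  qed (use w in auto)
  also have "ceq \<dots> (tc ?a (esubst (map (ex f) [0..<?b]) (ex g i)))"
    by (rule seq_tc) (use w Seq.IH(1) ex_evb[of g i] in auto)
  finally show ?case by simp
next
  case (Par f g)
  let ?a = "cdom f" and ?b = "ccod f" and ?c = "cdom g" and ?d = "ccod g"
  have w: "wf f" "wf g" "i < ?b + ?d" using Par.prems by auto
  show ?case
  proof (cases "i < ?b")
    case True
    let ?e = "ex f i"
    have "ceq (Seq (Par f g) (proj (?b + ?d) i)) (Seq (Par f g) (Par (proj ?b i) (discardn ?d)))"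
      by (rule seqR, rule ceq.sym, rule proj_split_l) (use w True in auto)
    also have "ceq \<dots> (Par (Seq f (proj ?b i)) (Seq g (discardn ?d)))"
      by (rule c_inter') (use w True in auto)
    also have "ceq \<dots> (Par (tc ?a ?e) (discardn ?c))"
      by (rule ceq.cong_par[OF Par.IH(1) c_discard_nat]) (use w True in auto)
    also have "ceq \<dots> (Seq (Par (Id ?a) (discardn ?c)) (tc ?a ?e))"
      by (rule weakL) auto
    also have "ceq \<dots> (tc (?a + ?c) (esubst (map Var [0..<?a]) ?e))"
    proof (rule seq_tc)
      fix j assume j: "j < ?a"
      have "ceq (Seq (Par (Id ?a) (discardn ?c)) (proj ?a j)) (Par (proj ?a j) (discardn ?c))"
        by (rule ceq.sym, rule weakL) (use j in auto)
      also have "ceq \<dots> (proj (?a + ?c) j)" by (rule proj_split_l[OF j])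
      finally show "ceq (Seq (Par (Id ?a) (discardn ?c)) (proj ?a j)) (tc (?a + ?c) (map Var [0..<?a] ! j))"
        using j by simp
    qed (use ex_evb[of f i] w True in auto)
    finally show ?thesis using True esubst_id[OF ex_evb[of f i]] w by simp
  next
    case False
    define k where "k = i - ?b"
    have k: "i = ?b + k" "k < ?d" using False w by (auto simp: k_def)
    let ?e = "ex g k"
    have "ceq (Seq (Par f g) (proj (?b + ?d) i)) (Seq (Par f g) (Par (discardn ?b) (proj ?d k)))"
      by (rule seqR, rule ceq.sym) (use proj_split_r[OF k(2), of ?b] k w in auto)
    also have "ceq \<dots> (Par (Seq f (discardn ?b)) (Seq g (proj ?d k)))"
      by (rule c_inter') (use w k in auto)
    also have "ceq \<dots> (Par (discardn ?a) (tc ?c ?e))"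
      by (rule ceq.cong_par[OF c_discard_nat Par.IH(2)]) (use w k in auto)
    also have "ceq \<dots> (Seq (Par (discardn ?a) (Id ?c)) (tc ?c ?e))"
      by (rule weakR) auto
    also have "ceq \<dots> (tc (?a + ?c) (esubst (map (\<lambda>j. Var (?a + j)) [0..<?c]) ?e))"
    proof (rule seq_tc)
      fix j assume j: "j < ?c"
      have "ceq (Seq (Par (discardn ?a) (Id ?c)) (proj ?c j)) (Par (discardn ?a) (proj ?c j))"
        by (rule ceq.sym, rule weakR) (use j in auto)
      also have "ceq \<dots> (proj (?a + ?c) (?a + j))" by (rule proj_split_r[OF j])
      finally show "ceq (Seq (Par (discardn ?a) (Id ?c)) (proj ?c j)) (tc (?a + ?c) (map (\<lambda>j. Var (?a + j)) [0..<?c] ! j))"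
        using j by simp
    qed (use ex_evb[of g k] w k in auto)
    finally show ?thesis using k by simp
  qed
qed



inductive eeq :: "expr \<Rightarrow> expr \<Rightarrow> bool" where
  e_refl: "eeq x x"
| e_sym: "eeq x y \<Longrightarrow> eeq y x"
| e_trans: "eeq x y \<Longrightarrow> eeq y z \<Longrightarrow> eeq x z"
| e_pl: "eeq x x' \<Longrightarrow> eeq y y' \<Longrightarrow> eeq (Pl x y) (Pl x' y')"
| e_ml: "eeq x x' \<Longrightarrow> eeq y y' \<Longrightarrow> eeq (Ml x y) (Ml x' y')"
| e_add_assoc: "eeq (Pl (Pl x y) z) (Pl x (Pl y z))"
| e_add_comm: "eeq (Pl x y) (Pl y x)"
| e_add_0: "eeq (Pl Zr x) x"
| e_mul_assoc: "eeq (Ml (Ml x y) z) (Ml x (Ml y z))"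
| e_mul_comm: "eeq (Ml x y) (Ml y x)"
| e_mul_1: "eeq (Ml On x) x"
| e_distrib: "eeq (Ml x (Pl y z)) (Pl (Ml x y) (Ml x z))"
| e_char: "eeq (Pl x x) Zr"

lemma eeq_epoly: "eeq x y \<Longrightarrow> epoly x = epoly y"
  by (induction rule: eeq.induct) (auto simp: algebra_simps)

lemma equivp_eeq: "equivp eeq"
  by (rule equivpI) (auto simp: reflp_def symp_def transp_def intro: e_refl e_sym e_trans)

quotient_type qexp = expr / eeq
  by (rule equivp_eeq)

instantiation qexp :: comm_ring_1
begin

lift_definition zero_qexp :: qexp is Zr .
lift_definition one_qexp :: qexp is On .
lift_definition plus_qexp :: "qexp \<Rightarrow> qexp \<Rightarrow> qexp" is Pl by (rule e_pl)
lift_definition times_qexp :: "qexp \<Rightarrow> qexp \<Rightarrow> qexp" is Ml by (rule e_ml)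
lift_definition uminus_qexp :: "qexp \<Rightarrow> qexp" is "\<lambda>x. x" .
lift_definition minus_qexp :: "qexp \<Rightarrow> qexp \<Rightarrow> qexp" is Pl by (rule e_pl)

instance
proof
  fix a b c :: qexp
  show "a + b + c = a + (b + c)" by transfer (rule e_add_assoc)
  show "a + b = b + a" by transfer (rule e_add_comm)
  show "0 + a = a" by transfer (rule e_add_0)
  show "a * b * c = a * (b * c)" by transfer (rule e_mul_assoc)
  show "a * b = b * a" by transfer (rule e_mul_comm)
  show "1 * a = a" by transfer (rule e_mul_1)
  show "(a + b) * c = a * c + b * c"
    by transfer (meson e_trans e_mul_comm e_distrib e_pl)
  show "- a + a = 0" by transfer (rule e_char)
  show "a - b = a + - b" by transfer (rule e_refl)
  show "(0::qexp) \<noteq> 1"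
  proof transfer
    show "\<not> eeq Zr On" using eeq_epoly[of Zr On] by auto
  qed
qed

end

lemma qexp_char2: "(1::qexp) + 1 = 0" by transfer (rule e_char)

lemma ev_qexp: "ev (\<lambda>i. abs_qexp (Var i)) (epoly e) = abs_qexp e"
proof (induction e)
  case (Var i) then show ?case by simp
next
  case Zr then show ?case by (simp add: zero_qexp_def)
next
  case On then show ?case by (simp add: one_qexp_def)
next
  case (Pl e1 e2) then show ?case
    by (simp add: ev_add[OF qexp_char2]) (metis plus_qexp.abs_eq qexp.abs_eq_iff e_refl)
next
  case (Ml e1 e2) then show ?case
    by (simp add: ev_mult[OF qexp_char2]) (metis times_qexp.abs_eq qexp.abs_eq_iff e_refl)
qed

lemma epoly_eeq: "epoly x = epoly y \<Longrightarrow> eeq x y"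
  by (metis ev_qexp qexp.abs_eq_iff)



lemma pat: "wf C \<Longrightarrow> ccod C = 1 \<Longrightarrow> ceq C (tc (cdom C) (ex C 0))"
proof -
  assume C: "wf C" "ccod C = 1"
  have "ceq C (Seq C (Id 1))" by (rule ceq.sym, rule c_id_right) (use C in auto)
  also have "ceq \<dots> (Seq C (proj 1 0))" by (rule seqR, rule ceq.sym, rule proj10) (use C in auto)
  also have "ceq \<dots> (tc (cdom C) (ex C 0))" using comp_ex[of C 0] C by simp
  finally show ?thesis .
qed

lemma inst:
  assumes "length es = k" "wf C" "cdom C = k" "ccod C = 1" "evb k P" "ceq (tc k P) C"
  shows "ceq (tc a (esubst es P)) (Seq (tup a (map (tc a) es)) C)"
proof -
  let ?T = "tup a (map (tc a) es)"
  have h: "homs (map (tc a) es) a" by (auto simp: homs_def)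
  have "ceq (Seq ?T (tc k P)) (tc a (esubst es P))"
  proof (rule seq_tc)
    fix j assume "j < k"
    then show "ceq (Seq ?T (proj k j)) (tc a (es ! j))"
      using tup_proj[OF h, of j] assms by simp
  qed (use h assms in auto)
  then have "ceq (tc a (esubst es P)) (Seq ?T (tc k P))" by (rule ceq.sym)
  also have "ceq \<dots> (Seq ?T C)" by (rule seqR[OF assms(6)]) (use h assms in auto)
  finally show ?thesis .
qed

lemma ax:
  assumes "ceq CL CR" "cdom CL = k" "ccod CL = 1" "ex CL 0 = L" "ex CR 0 = R" "length es = k"
  shows "ceq (tc a (esubst es L)) (tc a (esubst es R))"
proof -
  have w: "wf CL" "wf CR" "cdom CR = k" "ccod CR = 1" using ceq_wf[OF assms(1)] assms by auto
  have eL: "evb k L" using ex_evb[of CL 0] w assms by auto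
  have eR: "evb k R" using ex_evb[of CR 0] w assms by auto
  have pL: "ceq (tc k L) CL" using pat[of CL] w assms by (auto intro: ceq.sym)
  have pR: "ceq (tc k R) CR" using pat[of CR] w assms by (auto intro: ceq.sym)
  have "ceq (tc a (esubst es L)) (Seq (tup a (map (tc a) es)) CL)"
    by (rule inst) (use w assms eL pL in auto)
  also have "ceq \<dots> (Seq (tup a (map (tc a) es)) CR)"
    by (rule seqR[OF assms(1)]) (use w assms in \<open>auto simp: homs_def\<close>)
  also have "ceq \<dots> (tc a (esubst es R))"
    by (rule ceq.sym, rule inst) (use w assms eR pR in auto)
  finally show ?thesis .
qed

lemma eeq_ceq: "eeq x y \<Longrightarrow> ceq (tc a x) (tc a y)"
proof (induction rule: eeq.induct)
  case (e_refl x) then show ?case by (rule c_refl[OF hom_tc(1)])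
next
  case (e_sym x y) show ?case by (rule ceq.sym[OF e_sym.IH])
next
  case (e_trans x y z) show ?case by (rule ceq.trans[OF e_trans.IH])
next
  case (e_pl x x' y y') then show ?case by (simp, intro seqL seqR ceq.cong_par) auto
next
  case (e_ml x x' y y') then show ?case by (simp, intro seqL seqR ceq.cong_par) auto
next
  case (e_add_assoc x y z)
  show ?case using ax[OF ceq.add_assoc, of 3 "Pl (Pl (Var 0) (Var 1)) (Var 2)" "Pl (Var 0) (Pl (Var 1) (Var 2))" "[x,y,z]" a]
    by (simp add: upt_rec)
next
  case (e_add_comm x y)
  show ?case using ax[OF ceq.add_comm, of 2 "Pl (Var 1) (Var 0)" "Pl (Var 0) (Var 1)" "[x,y]" a]
    by (auto simp: upt_rec intro: ceq.sym)
next
  case (e_add_0 x)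
  show ?case using ax[OF ceq.add_unit, of 1 "Pl Zr (Var 0)" "Var 0" "[x]" a]
    by (simp add: upt_rec)
next
  case (e_mul_assoc x y z)
  show ?case using ax[OF ceq.and_assoc, of 3 "Ml (Ml (Var 0) (Var 1)) (Var 2)" "Ml (Var 0) (Ml (Var 1) (Var 2))" "[x,y,z]" a]
    by (simp add: upt_rec)
next
  case (e_mul_comm x y)
  show ?case using ax[OF ceq.and_comm, of 2 "Ml (Var 1) (Var 0)" "Ml (Var 0) (Var 1)" "[x,y]" a]
    by (auto simp: upt_rec intro: ceq.sym)
next
  case (e_mul_1 x)
  show ?case using ax[OF ceq.and_unit, of 1 "Ml On (Var 0)" "Var 0" "[x]" a]
    by (simp add: upt_rec)
next
  case (e_distrib x y z)
  show ?case using ax[OF ceq.distrib, of 3 "Ml (Var 0) (Pl (Var 1) (Var 2))" "Pl (Ml (Var 0) (Var 1)) (Ml (Var 0) (Var 2))" "[x,y,z]" a]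
    by (simp add: upt_rec)
next
  case (e_char x)
  show ?case using ax[OF ceq.char2, of 1 "Pl (Var 0) (Var 0)" Zr "[x]" a]
    by (simp add: upt_rec)
qed



lemma interp_proj: "j < b \<Longrightarrow> interp (proj b j) = [X j]"
  by (simp add: proj_def interp_par discardn_wf)

lemma interp_seq_proj: "wf f \<Longrightarrow> j < ccod f \<Longrightarrow> interp (Seq f (proj (ccod f) j)) = [interp f ! j]"
  by (simp add: interp_seq interp_proj)

lemma interp_copy_par:
  assumes "wf f" "wf g" "cdom f = a" "cdom g = a"
  shows "interp (Seq (copyn a) (Par f g)) = interp f @ interp g"
proof -
  let ?M = "map X ([0..<a] @ [0..<a])"
  have vg: "\<forall>p\<in>set (interp g). vars_in {..<a} p" using set_interp_vars[OF assms(2)] assms(4) by simp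
  have 1: "map (ev ((!) ?M)) (interp f) = interp f"
    by (subst map_ev_cong[where n="a" and t=X]) (use assms in \<open>auto simp: set_interp_vars nth_append\<close>)
  have 2: "map (ev ((!) ?M)) (map (sh a) (interp g)) = interp g"
    unfolding map_map o_def ev_sh
    by (subst map_ev_cong[where n="a" and t=X]) (use assms vg in \<open>auto simp: nth_append\<close>)
  show ?thesis
    unfolding interp_seq interp_par interp_copyn using 1 2 assms by simp
qed

lemma interp_tc: "evb a e \<Longrightarrow> interp (tc a e) = [epoly e]"
proof (induction e)
  case (Var i) then show ?case by (simp add: interp_proj)
next
  case Zr then show ?case by (simp add: interp_seq discardn_wf)
next
  case On then show ?case by (simp add: interp_seq discardn_wf)
next
  case (Pl e1 e2)
  have "interp (Seq (copyn a) (Par (tc a e1) (tc a e2))) = [epoly e1, epoly e2]"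
    using interp_copy_par[of "tc a e1" "tc a e2" a] Pl by simp
  then show ?case by (simp add: interp_seq[of "Seq (copyn a) (Par (tc a e1) (tc a e2))" "Gen Add"])
next
  case (Ml e1 e2)
  have "interp (Seq (copyn a) (Par (tc a e1) (tc a e2))) = [epoly e1, epoly e2]"
    using interp_copy_par[of "tc a e1" "tc a e2" a] Ml by simp
  then show ?case by (simp add: interp_seq[of "Seq (copyn a) (Par (tc a e1) (tc a e2))" "Gen And"])
qed

lemma epoly_ex: "wf f \<Longrightarrow> j < ccod f \<Longrightarrow> epoly (ex f j) = interp f ! j"
proof -
  assume f: "wf f" "j < ccod f"
  have "interp (Seq f (proj (ccod f) j)) = interp (tc (cdom f) (ex f j))"
    using ceq_sound[OF comp_ex[OF f]] by blast
  then show ?thesis using interp_seq_proj[OF f] interp_tc[OF ex_evb[OF f]] by simp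
qed

lemma normal_form:
  assumes "wf f" "cdom f = a" "ccod f = b"
  shows "ceq f (tup a (map (\<lambda>j. tc a (ex f j)) [0..<b]))"
proof -
  have "ceq f (Seq f (Id b))" by (rule ceq.sym, rule c_id_right) (use assms in auto)
  also have "ceq \<dots> (Seq f (tup b (map (proj b) [0..<b])))"
    by (rule seqR, rule ceq.sym, rule tup_eta) (use assms in auto)
  also have "ceq \<dots> (tup a (map (Seq f) (map (proj b) [0..<b])))"
    by (rule tup_nat) (use assms in \<open>auto simp: homs_def\<close>)
  also have "tup a (map (Seq f) (map (proj b) [0..<b])) = tup a (map (\<lambda>j. Seq f (proj b j)) [0..<b])"
    by (simp add: o_def)
  also have "ceq \<dots> (tup a (map (\<lambda>j. tc a (ex f j)) [0..<b]))"
    by (rule tup_cong) (use assms comp_ex[of f] in auto)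
  finally show ?thesis .
qed

lemma exists_expr: "vars_in {..<a} p \<Longrightarrow> \<exists>e. evb a e \<and> epoly e = p"
proof (induction rule: zpoly_induct)
  case zero then show ?case by (rule exI[of _ Zr]) simp
next
  case one then show ?case by (rule exI[of _ On]) simp
next
  case (var i) then show ?case by (intro exI[of _ "Var i"]) simp
next
  case (add p q) then obtain e1 e2 where "evb a e1 \<and> epoly e1 = p" "evb a e2 \<and> epoly e2 = q" by blast
  then show ?case by (intro exI[of _ "Pl e1 e2"]) simp
next
  case (mult p q) then obtain e1 e2 where "evb a e1 \<and> epoly e1 = p" "evb a e2 \<and> epoly e2 = q" by blast
  then show ?case by (intro exI[of _ "Ml e1 e2"]) simp
qed

lemma exists_exprs: "\<forall>p\<in>set ps. vars_in {..<a} p \<Longrightarrow> \<exists>es. (\<forall>e\<in>set es. evb a e) \<and> map epoly es = ps"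
proof (induction ps)
  case Nil then show ?case by simp
next
  case (Cons p ps)
  then obtain es where es: "(\<forall>e\<in>set es. evb a e) \<and> map epoly es = ps" by auto
  obtain e where "evb a e \<and> epoly e = p" using exists_expr Cons.prems by auto
  then show ?case using es by (intro exI[of _ "e # es"]) auto
qed

lemma interp_tup: "(\<forall>e\<in>set es. evb a e) \<Longrightarrow> interp (tup a (map (tc a) es)) = map epoly es"
proof (induction es)
  case Nil then show ?case by (simp add: discardn_wf)
next
  case (Cons e es)
  have h: "homs (map (tc a) es) a" by (auto simp: homs_def)
  show ?case using Cons interp_copy_par[of "tc a e" "tup a (map (tc a) es)" a] h interp_tc[of a e] by simp
qed

theorem proposition2:
  shows "(\<forall>f. wf f \<longrightarrow> length (interp f) = ccod f \<and> (\<forall>p\<in>set (interp f). vars_in {..<cdom f} p))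
   \<and> (\<forall>a b f g. hom f a b \<longrightarrow> hom g a b \<longrightarrow> (ceq f g \<longleftrightarrow> interp f = interp g))
   \<and> (\<forall>a ps. (\<forall>p\<in>set ps. vars_in {..<a} p) \<longrightarrow> (\<exists>f. hom f a (length ps) \<and> interp f = ps))"
proof (intro conjI allI impI)
  fix f assume "wf f"
  then show "length (interp f) = ccod f" "\<forall>p\<in>set (interp f). vars_in {..<cdom f} p"
    using wf_interp by auto
next
  fix a b f g assume f: "hom f a b" and g: "hom g a b"
  show "ceq f g \<longleftrightarrow> interp f = interp g"
  proof
    assume "ceq f g" then show "interp f = interp g" using ceq_sound by blast
  next
    assume eq: "interp f = interp g"
    have fw: "wf f" "cdom f = a" "ccod f = b" and gw: "wf g" "cdom g = a" "ccod g = b"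
      using f g by (auto simp: hom_def)
    have "ceq f (tup a (map (\<lambda>j. tc a (ex f j)) [0..<b]))" by (rule normal_form[OF fw])
    also have "ceq \<dots> (tup a (map (\<lambda>j. tc a (ex g j)) [0..<b]))"
    proof (rule tup_cong)
      fix j assume "j \<in> set [0..<b]"
      then have j: "j < b" by simp
      have "epoly (ex f j) = epoly (ex g j)"
        using epoly_ex[of f j] epoly_ex[of g j] fw gw j eq by simp
      then show "ceq (tc a (ex f j)) (tc a (ex g j))" by (intro eeq_ceq epoly_eeq)
    qed simp
    also have "ceq \<dots> g" by (rule ceq.sym, rule normal_form[OF gw])
    finally show "ceq f g" .
  qed
next
  fix a ps assume "\<forall>p\<in>set ps. vars_in {..<a} p"
  then obtain es where es: "\<forall>e\<in>set es. evb a e" "map epoly es = ps" using exists_exprs by blast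
  have h: "homs (map (tc a) es) a" by (auto simp: homs_def)
  show "\<exists>f. hom f a (length ps) \<and> interp f = ps"
    by (intro exI[of _ "tup a (map (tc a) es)"]) (use h es interp_tup[OF es(1)] in \<open>auto simp: hom_def\<close>)
qed


end
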